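(* Let $R$ be a commutative domain, $B=R(t,\sigma,H,J)$, assume $\sigma^n=\mathrm{id}_R$, let $\mathcal O$ be a $\sigma$-orbit in $\operatorname{Maxspec}(R)$ of size $n$ containing no breaks, and let $\mathfrak m\in\mathcal O$. (1) If $N$ is a $\Lambda_n/(\mathfrak m)$-module, there is an invertible $R/\mathfrak m$-linear map $\theta\in\operatorname{Aut}_{R/\mathfrak m}(N)$ such that for all $a\in I^{(n)}$ and $b\in I^{(-n)}$, $at^n$ acts on $N$ as $\bar a\theta$ and $bt^{-n}$ acts as $\bar b\theta^{-1}$, where $\bar a,\bar b$ denote images in $R/\mathfrak m$ (so these act as $0$ when $a\in\mathfrak m$, resp. $b\in\mathfrak m$). (2) Conversely, if $N$ is an $R/\mathfrak m$-vector space and $\theta\in\operatorname{Aut}_{R/\mathfrak m}(N)$, then setting $R$ to act through $R/\mathfrak m$, $at^n\mapsto\bar a\theta$ and $bt^{-n}\mapsto\bar b\theta^{-1}$ defines a $\Lambda_n/(\mathfrak m)$-module structure on $N$. (3) Such an $N$ is a simple $\Lambda_n/(\mathfrak m)$-module if and only if $N$ has no $\theta$-invariant subspaces other than $0$ and $N$.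
   Context: $\Bbbk$ is a field; all algebras are associative unital $\Bbbk$-algebras. For an algebra $R$ and $\sigma\in\operatorname{Aut}_\Bbbk(R)$, $R[t,t^{-1};\sigma]$ is the skew Laurent ring: generated over $R$ by $t,t^{-1}$ with $tt^{-1}=t^{-1}t=1$ and $t^{\pm1}r=\sigma^{\pm1}(r)t^{\pm1}$ for $r\in R$. Given two-sided ideals $H,J$ of $R$, set $I^{(0)}=R$, $I^{(n)}=J\sigma(J)\cdots\sigma^{n-1}(J)$ for $n\ge1$, and $I^{(n)}=\sigma^{-1}(H)\sigma^{-2}(H)\cdots\sigma^{n}(H)$ for $n\le-1$; it is assumed throughout that $I^{(n)}\neq0$ for all $n\in\mathbb Z$. The Bell–Rogalski (BR) algebra is $R(t,\sigma,H,J)=\bigoplus_{n\in\mathbb Z}I^{(n)}t^n\subseteq R[t,t^{-1};\sigma]$; $B_k=I^{(k)}t^k$. For $R$ commutative, $\mathcal S(B)=\{\mathfrak p\in\operatorname{Spec}(R):\mathfrak p\supseteq HJ\}$; a maximal ideal $\mathfrak m$ is a break if $\sigma(\mathfrak m)\in\mathcal S(B)$. $\sigma$-orbits are orbits of $k\cdot\mathfrak m=\sigma^k(\mathfrak m)$ on $\operatorname{Maxspec}(R)$. With $\sigma^n=\mathrm{id}$: $\Lambda_n=\bigoplus_{k\in\mathbb Z}B_{kn}$; for $\mathfrak m\in\mathcal O$, $(\mathfrak m)=\mathfrak m\Lambda_n=\Lambda_n\mathfrak m$ is a two-sided ideal of $\Lambda_n$. *)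

theory Defs
  imports Main
begin

definition is_ideal :: "'a::comm_ring_1 set \<Rightarrow> bool" where
  "is_ideal I \<longleftrightarrow> 0 \<in> I \<and> (\<forall>a\<in>I. \<forall>b\<in>I. a + b \<in> I) \<and> (\<forall>a\<in>I. - a \<in> I)
     \<and> (\<forall>r a. a \<in> I \<longrightarrow> r * a \<in> I)"

definition maximal_ideal :: "'a::comm_ring_1 set \<Rightarrow> bool" where
  "maximal_ideal M \<longleftrightarrow> is_ideal M \<and> M \<noteq> UNIV \<and>
     (\<forall>K. is_ideal K \<and> M \<subseteq> K \<longrightarrow> K = M \<or> K = UNIV)"

definition prime_ideal :: "'a::comm_ring_1 set \<Rightarrow> bool" where
  "prime_ideal P \<longleftrightarrow> is_ideal P \<and> P \<noteq> UNIV \<and> (\<forall>a b. a * b \<in> P \<longrightarrow> a \<in> P \<or> b \<in> P)"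

definition ideal_prod :: "'a::comm_ring_1 set \<Rightarrow> 'a set \<Rightarrow> 'a set" where
  "ideal_prod I J = \<Inter>{K. is_ideal K \<and> (\<forall>a\<in>I. \<forall>b\<in>J. a * b \<in> K)}"

definition ring_hom_map :: "('k::field \<Rightarrow> 'a::comm_ring_1) \<Rightarrow> bool" where
  "ring_hom_map \<iota> \<longleftrightarrow> (\<forall>x y. \<iota> (x + y) = \<iota> x + \<iota> y) \<and> (\<forall>x y. \<iota> (x * y) = \<iota> x * \<iota> y) \<and> \<iota> 1 = 1"

definition ring_aut :: "('a::comm_ring_1 \<Rightarrow> 'a) \<Rightarrow> bool" where
  "ring_aut \<sigma> \<longleftrightarrow> bij \<sigma> \<and> (\<forall>x y. \<sigma> (x + y) = \<sigma> x + \<sigma> y) \<and> (\<forall>x y. \<sigma> (x * y) = \<sigma> x * \<sigma> y) \<and> \<sigma> 1 = 1"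

definition spow :: "('a \<Rightarrow> 'a) \<Rightarrow> int \<Rightarrow> 'a \<Rightarrow> 'a" where
  "spow \<sigma> k = (if 0 \<le> k then \<sigma> ^^ nat k else (inv \<sigma>) ^^ nat (- k))"

fun Ipos :: "('a::comm_ring_1 \<Rightarrow> 'a) \<Rightarrow> 'a set \<Rightarrow> nat \<Rightarrow> 'a set" where
  "Ipos \<sigma> J 0 = UNIV"
| "Ipos \<sigma> J (Suc k) = ideal_prod (Ipos \<sigma> J k) ((\<sigma> ^^ k) ` J)"

fun Ineg :: "('a::comm_ring_1 \<Rightarrow> 'a) \<Rightarrow> 'a set \<Rightarrow> nat \<Rightarrow> 'a set" where
  "Ineg \<sigma> H 0 = UNIV"
| "Ineg \<sigma> H (Suc k) = ideal_prod (Ineg \<sigma> H k) (spow \<sigma> (- (int k + 1)) ` H)"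

text \<open>I^(k): J sigma(J)...sigma^(k-1)(J) for k>=1, R for k=0,
  sigma^-1(H)...sigma^k(H) for k<=-1.\<close>
definition BR_I :: "('a::comm_ring_1 \<Rightarrow> 'a) \<Rightarrow> 'a set \<Rightarrow> 'a set \<Rightarrow> int \<Rightarrow> 'a set" where
  "BR_I \<sigma> H J k = (if 0 \<le> k then Ipos \<sigma> J (nat k) else Ineg \<sigma> H (nat (- k)))"

definition SB :: "'a::comm_ring_1 set \<Rightarrow> 'a set \<Rightarrow> 'a set set" where
  "SB H J = {P. prime_ideal P \<and> ideal_prod H J \<subseteq> P}"

definition is_break :: "('a::comm_ring_1 \<Rightarrow> 'a) \<Rightarrow> 'a set \<Rightarrow> 'a set \<Rightarrow> 'a set \<Rightarrow> bool" where
  "is_break \<sigma> H J M \<longleftrightarrow> maximal_ideal M \<and> \<sigma> ` M \<in> SB H J"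

definition sigma_orbit :: "('a \<Rightarrow> 'a) \<Rightarrow> 'a set \<Rightarrow> 'a set set" where
  "sigma_orbit \<sigma> M = {spow \<sigma> k ` M | k. True}"

text \<open>An element sum_k f(k) t^k is represented by a finitely supported f :: int => R.\<close>
definition finsupp :: "(int \<Rightarrow> 'a::zero) \<Rightarrow> bool" where
  "finsupp f \<longleftrightarrow> finite {k. f k \<noteq> 0}"

text \<open>(a t^i)(b t^j) = a sigma^i(b) t^(i+j).\<close>
definition skew_mult :: "('a::comm_ring_1 \<Rightarrow> 'a) \<Rightarrow> (int \<Rightarrow> 'a) \<Rightarrow> (int \<Rightarrow> 'a) \<Rightarrow> int \<Rightarrow> 'a" where
  "skew_mult \<sigma> f g = (\<lambda>k. \<Sum>i\<in>{i. f i \<noteq> 0}. f i * spow \<sigma> i (g (k - i)))"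

definition skew_add :: "(int \<Rightarrow> 'a::comm_ring_1) \<Rightarrow> (int \<Rightarrow> 'a) \<Rightarrow> int \<Rightarrow> 'a" where
  "skew_add f g = (\<lambda>k. f k + g k)"

definition tmono :: "int \<Rightarrow> 'a::zero \<Rightarrow> int \<Rightarrow> 'a" where
  "tmono k a = (\<lambda>j. if j = k then a else 0)"

text \<open>Lambda_n = direct sum of B_(kn) = I^(kn) t^(kn) inside the skew Laurent ring.\<close>
definition Lambda :: "('a::comm_ring_1 \<Rightarrow> 'a) \<Rightarrow> 'a set \<Rightarrow> 'a set \<Rightarrow> nat \<Rightarrow> (int \<Rightarrow> 'a) set" where
  "Lambda \<sigma> H J n = {f. finsupp f \<and> (\<forall>k. f k \<in> BR_I \<sigma> H J k) \<and> (\<forall>k. \<not> int n dvd k \<longrightarrow> f k = 0)}"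

inductive_set ext_ideal :: "('a::comm_ring_1 \<Rightarrow> 'a) \<Rightarrow> 'a set \<Rightarrow> 'a set \<Rightarrow> nat \<Rightarrow> 'a set \<Rightarrow> (int \<Rightarrow> 'a) set"
  for \<sigma> H J n M where
  zero: "(\<lambda>_. 0) \<in> ext_ideal \<sigma> H J n M"
| gen: "x \<in> M \<Longrightarrow> f \<in> Lambda \<sigma> H J n \<Longrightarrow> skew_mult \<sigma> (tmono 0 x) f \<in> ext_ideal \<sigma> H J n M"
| add: "a \<in> ext_ideal \<sigma> H J n M \<Longrightarrow> b \<in> ext_ideal \<sigma> H J n M \<Longrightarrow> skew_add a b \<in> ext_ideal \<sigma> H J n M"

definition Lambda_module :: "('a::comm_ring_1 \<Rightarrow> 'a) \<Rightarrow> 'a set \<Rightarrow> 'a set \<Rightarrow> nat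
    \<Rightarrow> ((int \<Rightarrow> 'a) \<Rightarrow> 'v::ab_group_add \<Rightarrow> 'v) \<Rightarrow> bool" where
  "Lambda_module \<sigma> H J n act \<longleftrightarrow>
     (\<forall>v. act (tmono 0 1) v = v) \<and>
     (\<forall>f\<in>Lambda \<sigma> H J n. \<forall>g\<in>Lambda \<sigma> H J n. \<forall>v. act (skew_add f g) v = act f v + act g v) \<and>
     (\<forall>f\<in>Lambda \<sigma> H J n. \<forall>v w. act f (v + w) = act f v + act f w) \<and>
     (\<forall>f\<in>Lambda \<sigma> H J n. \<forall>g\<in>Lambda \<sigma> H J n. \<forall>v. act (skew_mult \<sigma> f g) v = act f (act g v))"

text \<open>A Lambda_n/(M)-module: a Lambda_n-module annihilated by the ideal (M).\<close>
definition quot_module :: "('a::comm_ring_1 \<Rightarrow> 'a) \<Rightarrow> 'a set \<Rightarrow> 'a set \<Rightarrow> nat \<Rightarrow> 'a set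
    \<Rightarrow> ((int \<Rightarrow> 'a) \<Rightarrow> 'v::ab_group_add \<Rightarrow> 'v) \<Rightarrow> bool" where
  "quot_module \<sigma> H J n M act \<longleftrightarrow> Lambda_module \<sigma> H J n act \<and>
     (\<forall>f\<in>ext_ideal \<sigma> H J n M. \<forall>v. act f v = 0)"

definition submodule :: "('a::comm_ring_1 \<Rightarrow> 'a) \<Rightarrow> 'a set \<Rightarrow> 'a set \<Rightarrow> nat
    \<Rightarrow> ((int \<Rightarrow> 'a) \<Rightarrow> 'v::ab_group_add \<Rightarrow> 'v) \<Rightarrow> 'v set \<Rightarrow> bool" where
  "submodule \<sigma> H J n act W \<longleftrightarrow> 0 \<in> W \<and> (\<forall>v\<in>W. \<forall>w\<in>W. v + w \<in> W) \<and> (\<forall>v\<in>W. - v \<in> W) \<and>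
     (\<forall>f\<in>Lambda \<sigma> H J n. \<forall>v\<in>W. act f v \<in> W)"

definition simple_module :: "('a::comm_ring_1 \<Rightarrow> 'a) \<Rightarrow> 'a set \<Rightarrow> 'a set \<Rightarrow> nat
    \<Rightarrow> ((int \<Rightarrow> 'a) \<Rightarrow> 'v::ab_group_add \<Rightarrow> 'v) \<Rightarrow> bool" where
  "simple_module \<sigma> H J n act \<longleftrightarrow> (\<exists>v::'v. v \<noteq> 0) \<and>
     (\<forall>W. submodule \<sigma> H J n act W \<longrightarrow> W = {0} \<or> W = UNIV)"

text \<open>An R/M-vector space, i.e. an R-module on 'v annihilated by M.\<close>
definition RM_space :: "'a::comm_ring_1 set \<Rightarrow> ('a \<Rightarrow> 'v::ab_group_add \<Rightarrow> 'v) \<Rightarrow> bool" where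
  "RM_space M rmul \<longleftrightarrow>
     (\<forall>v. rmul 1 v = v) \<and> (\<forall>a b v. rmul (a + b) v = rmul a v + rmul b v) \<and>
     (\<forall>a v w. rmul a (v + w) = rmul a v + rmul a w) \<and>
     (\<forall>a b v. rmul (a * b) v = rmul a (rmul b v)) \<and> (\<forall>x\<in>M. \<forall>v. rmul x v = 0)"

definition lin_aut :: "('a \<Rightarrow> 'v::ab_group_add \<Rightarrow> 'v) \<Rightarrow> ('v \<Rightarrow> 'v) \<Rightarrow> bool" where
  "lin_aut rmul \<theta> \<longleftrightarrow> bij \<theta> \<and> (\<forall>v w. \<theta> (v + w) = \<theta> v + \<theta> w) \<and> (\<forall>r v. \<theta> (rmul r v) = rmul r (\<theta> v))"

definition subspace :: "('a \<Rightarrow> 'v::ab_group_add \<Rightarrow> 'v) \<Rightarrow> 'v set \<Rightarrow> bool" where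
  "subspace rmul W \<longleftrightarrow> 0 \<in> W \<and> (\<forall>v\<in>W. \<forall>w\<in>W. v + w \<in> W) \<and> (\<forall>v\<in>W. - v \<in> W) \<and>
     (\<forall>r. \<forall>v\<in>W. rmul r v \<in> W)"

definition theta_acts :: "('a::comm_ring_1 \<Rightarrow> 'a) \<Rightarrow> 'a set \<Rightarrow> 'a set \<Rightarrow> nat
    \<Rightarrow> ((int \<Rightarrow> 'a) \<Rightarrow> 'v::ab_group_add \<Rightarrow> 'v) \<Rightarrow> ('a \<Rightarrow> 'v \<Rightarrow> 'v) \<Rightarrow> ('v \<Rightarrow> 'v) \<Rightarrow> bool" where
  "theta_acts \<sigma> H J n act rmul \<theta> \<longleftrightarrow>
     (\<forall>a\<in>BR_I \<sigma> H J (int n). \<forall>v. act (tmono (int n) a) v = rmul a (\<theta> v)) \<and>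
     (\<forall>b\<in>BR_I \<sigma> H J (- int n). \<forall>v. act (tmono (- int n) b) v = rmul b (inv \<theta> v))"

end

theory Submission
  imports Defs
begin


lemma idealD:
  assumes "is_ideal I"
  shows "0 \<in> I" "\<And>a b. a \<in> I \<Longrightarrow> b \<in> I \<Longrightarrow> a + b \<in> I" "\<And>a. a \<in> I \<Longrightarrow> - a \<in> I"
    "\<And>r a. a \<in> I \<Longrightarrow> r * a \<in> I" "\<And>r a. a \<in> I \<Longrightarrow> a * r \<in> I"
    "\<And>a b. a \<in> I \<Longrightarrow> b \<in> I \<Longrightarrow> a - b \<in> I"
  using assms unfolding is_ideal_def
  apply (auto simp: mult.commute)
  by (metis diff_conv_add_uminus)

lemma ideal_sum:
  assumes "is_ideal I" "finite S" "\<forall>x\<in>S. f x \<in> I"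
  shows "sum f S \<in> I"
  using assms(2,3) by (induction S rule: finite_induct) (auto intro: idealD[OF assms(1)])

lemma ideal_UNIV: "is_ideal UNIV" by (simp add: is_ideal_def)

lemma ideal_Inter: "\<forall>K\<in>S. is_ideal K \<Longrightarrow> is_ideal (\<Inter>S)"
  unfolding is_ideal_def by auto

lemma ideal_prod_ideal: "is_ideal (ideal_prod A B)"
  unfolding ideal_prod_def by (rule ideal_Inter) auto

lemma ideal_prod_mem: "a \<in> A \<Longrightarrow> b \<in> B \<Longrightarrow> a * b \<in> ideal_prod A B"
  unfolding ideal_prod_def by auto

lemma ideal_prod_sub: "is_ideal K \<Longrightarrow> (\<forall>a\<in>A. \<forall>b\<in>B. a * b \<in> K) \<Longrightarrow> ideal_prod A B \<subseteq> K"
  unfolding ideal_prod_def by auto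

lemma ideal_prod_subL: "is_ideal A \<Longrightarrow> ideal_prod A B \<subseteq> A"
  by (rule ideal_prod_sub) (auto intro: idealD)

lemma Ipos_ideal: "is_ideal (Ipos \<sigma> J k)"
  by (cases k) (auto simp: ideal_UNIV ideal_prod_ideal)

lemma Ineg_ideal: "is_ideal (Ineg \<sigma> H k)"
  by (cases k) (auto simp: ideal_UNIV ideal_prod_ideal)

lemma BR_I_ideal: "is_ideal (BR_I \<sigma> H J k)"
  by (simp add: BR_I_def Ipos_ideal Ineg_ideal)

lemma Ipos_anti: "k \<le> l \<Longrightarrow> Ipos \<sigma> J l \<subseteq> Ipos \<sigma> J k"
proof (induction l)
  case 0 then show ?case by simp
next
  case (Suc l)
  show ?case
  proof (cases "k = Suc l")
    case False
    then have "Ipos \<sigma> J l \<subseteq> Ipos \<sigma> J k" using Suc by simp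
    moreover have "Ipos \<sigma> J (Suc l) \<subseteq> Ipos \<sigma> J l" by (simp add: ideal_prod_subL Ipos_ideal)
    ultimately show ?thesis by blast
  qed simp
qed

lemma Ineg_anti: "k \<le> l \<Longrightarrow> Ineg \<sigma> H l \<subseteq> Ineg \<sigma> H k"
proof (induction l)
  case 0 then show ?case by simp
next
  case (Suc l)
  show ?case
  proof (cases "k = Suc l")
    case False
    then have "Ineg \<sigma> H l \<subseteq> Ineg \<sigma> H k" using Suc by simp
    moreover have "Ineg \<sigma> H (Suc l) \<subseteq> Ineg \<sigma> H l" by (simp add: ideal_prod_subL Ineg_ideal)
    ultimately show ?thesis by blast
  qed simp
qed

lemma max_ideal: "maximal_ideal M \<Longrightarrow> is_ideal M"
  by (simp add: maximal_ideal_def)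

lemma max_one: "maximal_ideal M \<Longrightarrow> (1::'a::comm_ring_1) \<notin> M"
proof
  assume m: "maximal_ideal M" and o: "1 \<in> M"
  have "\<And>r. r \<in> M" using idealD(4)[OF max_ideal[OF m] o] by (metis mult.right_neutral)
  then show False using m unfolding maximal_ideal_def by blast
qed

lemma max_inv:
  fixes M :: "'a::comm_ring_1 set"
  assumes "maximal_ideal M" "a \<notin> M"
  shows "\<exists>c. c * a - 1 \<in> M"
proof -
  define K where "K = {x. \<exists>m r. m \<in> M \<and> x = m + r * a}"
  have IM: "is_ideal M" using assms by (simp add: maximal_ideal_def)
  have Kin: "m + r * a \<in> K" if "m \<in> M" for m r using that unfolding K_def by blast
  have "is_ideal K"
    unfolding is_ideal_def
  proof (intro conjI ballI allI impI)
    have "0 + 0 * a \<in> K" by (rule Kin) (rule idealD(1)[OF IM])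
    then show "0 \<in> K" by simp
  next
    fix x y assume "x \<in> K" "y \<in> K"
    then obtain m1 r1 m2 r2 where e: "x = m1 + r1*a" "y = m2 + r2*a" and m: "m1 \<in> M" "m2 \<in> M"
      unfolding K_def by blast
    have "(m1 + m2) + (r1 + r2) * a \<in> K" by (rule Kin) (rule idealD(2)[OF IM m])
    then show "x + y \<in> K" by (simp add: e algebra_simps)
  next
    fix x assume "x \<in> K"
    then obtain m1 r1 where e: "x = m1 + r1*a" and m: "m1 \<in> M" unfolding K_def by blast
    have "(- m1) + (- r1) * a \<in> K" by (rule Kin) (rule idealD(3)[OF IM m])
    then show "- x \<in> K" by (simp add: e algebra_simps)
  next
    fix s x assume "x \<in> K"
    then obtain m1 r1 where e: "x = m1 + r1*a" and m: "m1 \<in> M" unfolding K_def by blast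
    have "(s * m1) + (s * r1) * a \<in> K" by (rule Kin) (rule idealD(4)[OF IM m])
    then show "s * x \<in> K" by (simp add: e algebra_simps)
  qed
  moreover have "M \<subseteq> K" using Kin[of _ 0] by auto
  moreover have "a \<in> K" using Kin[OF idealD(1)[OF IM], of 1] by simp
  moreover have "K \<noteq> M" using \<open>a \<in> K\<close> assms(2) by blast
  ultimately have "K = UNIV" using assms(1) unfolding maximal_ideal_def by blast
  then have "1 \<in> K" by simp
  then obtain m r where "1 = m + r * a" "m \<in> M" unfolding K_def by blast
  then have "r * a - 1 = - m" by (simp add: algebra_simps)
  then show ?thesis using \<open>m \<in> M\<close> idealD(3)[OF IM] by metis
qed

lemma max_prime:
  fixes M :: "'a::comm_ring_1 set"
  assumes "maximal_ideal M" "a * b \<in> M" "a \<notin> M"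
  shows "b \<in> M"
proof -
  obtain c where c: "c * a - 1 \<in> M" using max_inv assms by blast
  have IM: "is_ideal M" using assms by (simp add: maximal_ideal_def)
  have "b = c * (a * b) - (c * a - 1) * b" by (simp add: algebra_simps)
  then show ?thesis using idealD[OF IM] assms c by metis
qed

lemma max_prime_ideal: "maximal_ideal M \<Longrightarrow> prime_ideal M"
  unfolding prime_ideal_def using max_prime[of M] max_ideal[of M]
  by (auto simp: maximal_ideal_def)

lemma ideal_prod_notsub:
  assumes "maximal_ideal M" "\<not> A \<subseteq> M" "\<not> B \<subseteq> M"
  shows "\<not> ideal_prod A B \<subseteq> M"
proof
  assume h: "ideal_prod A B \<subseteq> M"
  obtain a b where "a \<in> A" "a \<notin> M" "b \<in> B" "b \<notin> M" using assms by blast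
  then show False using ideal_prod_mem[of a A b B] h max_prime[OF assms(1)] by blast
qed


lemma aut_add: "ring_aut \<tau> \<Longrightarrow> \<tau> (x + y) = \<tau> x + \<tau> y" by (simp add: ring_aut_def)
lemma aut_mult: "ring_aut \<tau> \<Longrightarrow> \<tau> (x * y) = \<tau> x * \<tau> y" by (simp add: ring_aut_def)
lemma aut_one: "ring_aut \<tau> \<Longrightarrow> \<tau> 1 = 1" by (simp add: ring_aut_def)
lemma aut_bij: "ring_aut \<tau> \<Longrightarrow> bij \<tau>" by (simp add: ring_aut_def)
lemma aut_zero: "ring_aut \<tau> \<Longrightarrow> \<tau> 0 = 0"
  using aut_add[of \<tau> 0 0] by simp
lemma aut_neg: "ring_aut \<tau> \<Longrightarrow> \<tau> (- x) = - \<tau> x"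
  using aut_add[of \<tau> x "-x"] aut_zero[of \<tau>] by (metis add.right_inverse minus_unique)

lemma aut_funpow:
  assumes a: "ring_aut \<tau>" shows "ring_aut (\<tau> ^^ k)"
proof (induction k)
  case 0 then show ?case by (simp add: ring_aut_def bij_id[unfolded id_def])
next
  case (Suc k)
  show ?case unfolding ring_aut_def
  proof (intro conjI allI)
    show "bij (\<tau> ^^ Suc k)" using bij_fn[OF aut_bij[OF a]] .
    fix x y
    show "(\<tau> ^^ Suc k) (x + y) = (\<tau> ^^ Suc k) x + (\<tau> ^^ Suc k) y"
      using aut_add[OF Suc.IH, of x y] aut_add[OF a] by simp
    show "(\<tau> ^^ Suc k) (x * y) = (\<tau> ^^ Suc k) x * (\<tau> ^^ Suc k) y"
      using aut_mult[OF Suc.IH, of x y] aut_mult[OF a] by simp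
  next
    show "(\<tau> ^^ Suc k) 1 = 1" using aut_one[OF Suc.IH] aut_one[OF a] by simp
  qed
qed

lemma aut_ideal_image:
  assumes "ring_aut \<tau>" "is_ideal P"
  shows "is_ideal (\<tau> ` P)"
  unfolding is_ideal_def
proof (intro conjI ballI allI impI)
  show "0 \<in> \<tau> ` P" using aut_zero[OF assms(1)] idealD(1)[OF assms(2)] by (metis image_eqI)
next
  fix x y assume "x \<in> \<tau> ` P" "y \<in> \<tau> ` P"
  then obtain a b where "x = \<tau> a" "y = \<tau> b" "a \<in> P" "b \<in> P" by auto
  then show "x + y \<in> \<tau> ` P" using aut_add[OF assms(1), of a b] idealD(2)[OF assms(2)]
    by (auto intro!: image_eqI[of _ \<tau> "a+b"])
next
  fix x assume "x \<in> \<tau> ` P"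
  then obtain a where "x = \<tau> a" "a \<in> P" by auto
  then show "- x \<in> \<tau> ` P" using aut_neg[OF assms(1), of a] idealD(3)[OF assms(2)]
    by (auto intro!: image_eqI[of _ \<tau> "-a"])
next
  fix r x assume "x \<in> \<tau> ` P"
  then obtain a where "x = \<tau> a" "a \<in> P" by auto
  obtain s where s: "r = \<tau> s" using aut_bij[OF assms(1)] by (metis bij_pointE)
  show "r * x \<in> \<tau> ` P" using aut_mult[OF assms(1), of s a] idealD(4)[OF assms(2)] s \<open>x = \<tau> a\<close> \<open>a \<in> P\<close>
    by (auto intro!: image_eqI[of _ \<tau> "s*a"])
qed

lemma aut_max_image:
  assumes "ring_aut \<tau>" "maximal_ideal P"
  shows "maximal_ideal (\<tau> ` P)"
proof -
  have IP: "is_ideal P" using assms(2) max_ideal by blast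
  have bj: "bij \<tau>" using aut_bij[OF assms(1)] .
  have "1 \<notin> \<tau> ` P"
  proof
    assume "1 \<in> \<tau> ` P"
    then obtain a where "a \<in> P" "\<tau> a = \<tau> 1" using aut_one[OF assms(1)] by auto
    then have "a = 1" using bij_is_inj[OF bj] by (simp add: inj_eq)
    then show False using \<open>a \<in> P\<close> max_one[OF assms(2)] by simp
  qed
  then have ne: "\<tau> ` P \<noteq> UNIV" by blast
  have mx: "K = \<tau> ` P \<or> K = UNIV" if K: "is_ideal K" "\<tau> ` P \<subseteq> K" for K
  proof -
    define L where "L = {x. \<tau> x \<in> K}"
    have "is_ideal L" unfolding is_ideal_def L_def
    proof (intro conjI ballI allI impI)
      show "0 \<in> {x. \<tau> x \<in> K}" using idealD(1)[OF K(1)] aut_zero[OF assms(1)] by simp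
      fix a b assume "a \<in> {x. \<tau> x \<in> K}" "b \<in> {x. \<tau> x \<in> K}"
      then show "a + b \<in> {x. \<tau> x \<in> K}" using idealD(2)[OF K(1)] aut_add[OF assms(1), of a b] by simp
    next
      fix a assume "a \<in> {x. \<tau> x \<in> K}"
      then show "- a \<in> {x. \<tau> x \<in> K}" using idealD(3)[OF K(1)] aut_neg[OF assms(1), of a] by simp
    next
      fix r a assume "a \<in> {x. \<tau> x \<in> K}"
      then show "r * a \<in> {x. \<tau> x \<in> K}" using idealD(4)[OF K(1)] aut_mult[OF assms(1), of r a] by simp
    qed
    moreover have "P \<subseteq> L" using K(2) unfolding L_def by auto
    ultimately have "L = P \<or> L = UNIV" using assms(2) unfolding maximal_ideal_def by blast
    then show ?thesis
    proof
      assume "L = P"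
      have "K \<subseteq> \<tau> ` P"
      proof
        fix y assume "y \<in> K"
        obtain x where "y = \<tau> x" using bj by (metis bij_pointE)
        then have "x \<in> L" using \<open>y \<in> K\<close> unfolding L_def by simp
        then show "y \<in> \<tau> ` P" using \<open>L = P\<close> \<open>y = \<tau> x\<close> by simp
      qed
      then show ?thesis using K(2) by blast
    next
      assume "L = UNIV"
      have "y \<in> K" for y
      proof -
        obtain x where "y = \<tau> x" using bj by (metis bij_pointE)
        then show ?thesis using \<open>L = UNIV\<close> unfolding L_def by auto
      qed
      then show ?thesis by blast
    qed
  qed
  show ?thesis unfolding maximal_ideal_def
    using aut_ideal_image[OF assms(1) IP] ne mx by blast
qed

lemma funpow_period_mod:
  assumes "(f :: 'b \<Rightarrow> 'b) ^^ n = id"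
  shows "f ^^ m = f ^^ (m mod n)"
  using funpow_mod_eq[where f=f and n=n] assms by (auto simp: fun_eq_iff)

locale BR =
  fixes \<sigma> :: "'a::idom \<Rightarrow> 'a" and H J :: "'a set" and n :: nat and M :: "'a set"
  assumes aut: "ring_aut \<sigma>" and H: "is_ideal H" and J: "is_ideal J"
    and npos: "0 < n" and period: "\<sigma> ^^ n = id" and Mmax: "maximal_ideal M"
    and a0ex: "\<exists>a. a \<in> BR_I \<sigma> H J (int n) \<and> a \<notin> M"
    and b0ex: "\<exists>b. b \<in> BR_I \<sigma> H J (- int n) \<and> b \<notin> M"
begin

lemma inv_sigma: "inv \<sigma> = \<sigma> ^^ (n - 1)"
proof (rule inv_unique_comp)
  show "\<sigma> \<circ> \<sigma> ^^ (n - 1) = id" using period npos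
    by (metis Suc_diff_1 funpow.simps(2))
  show "\<sigma> ^^ (n - 1) \<circ> \<sigma> = id" using period npos
    by (metis Suc_diff_1 funpow_Suc_right)
qed

lemma spow_mod: "spow \<sigma> k = \<sigma> ^^ nat (k mod int n)"
proof (cases "0 \<le> k")
  case True
  then have "nat (k mod int n) = nat k mod n" by (simp add: nat_mod_distrib)
  then show ?thesis using True funpow_period_mod[OF period, of "nat k"] by (simp add: spow_def)
next
  case False
  have "spow \<sigma> k = \<sigma> ^^ ((n - 1) * nat (-k))" using False
    by (simp add: spow_def inv_sigma funpow_mult mult.commute)
  also have "\<dots> = \<sigma> ^^ (((n - 1) * nat (-k)) mod n)" by (rule funpow_period_mod[OF period])
  also have "((n - 1) * nat (-k)) mod n = nat (k mod int n)"
  proof -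
    have e: "int ((n - 1) * nat (-k)) = k + (-k) * int n" using False npos by (simp add: of_nat_diff algebra_simps)
    have "int ((n - 1) * nat (-k)) mod int n = k mod int n" by (simp only: e mod_mult_self1)
    then show ?thesis by (metis nat_int zmod_int)
  qed
  finally show ?thesis .
qed

lemma spow_aut: "ring_aut (spow \<sigma> k)"
  by (simp add: spow_mod aut_funpow aut)

lemma spow_dvd: "int n dvd k \<Longrightarrow> spow \<sigma> k = id"
  by (simp add: spow_mod)

lemma spow_zero[simp]: "spow \<sigma> k 0 = 0"
  using aut_zero[OF spow_aut] .

lemma skew_mono: "skew_mult \<sigma> (tmono i a) g = (\<lambda>k. a * spow \<sigma> i (g (k - i)))"
proof (cases "a = 0")
  case True
  then have "{j. tmono i a j \<noteq> 0} = {}" by (simp add: tmono_def)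
  then show ?thesis using True by (simp add: skew_mult_def)
next
  case False
  then have "{j. tmono i a j \<noteq> 0} = {i}" by (auto simp: tmono_def)
  then show ?thesis by (simp add: skew_mult_def tmono_def)
qed

lemma mono_mono: "skew_mult \<sigma> (tmono i a) (tmono j b) = tmono (i + j) (a * spow \<sigma> i b)"
  unfolding skew_mono by (auto simp: skew_mono tmono_def fun_eq_iff)

lemma mono_mono_dvd: "int n dvd i \<Longrightarrow> skew_mult \<sigma> (tmono i a) (tmono j b) = tmono (i + j) (a * b)"
  by (simp add: mono_mono spow_dvd)

lemma mono_scal: "skew_mult \<sigma> (tmono 0 x) f = (\<lambda>k. x * f k)"
  by (simp add: skew_mono spow_def)

lemma add_mono: "skew_add (tmono k a) (tmono k b) = tmono k (a + b)"
  by (auto simp: skew_add_def tmono_def fun_eq_iff)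

lemma BR_I_0: "0 \<in> BR_I \<sigma> H J k"
  using idealD(1)[OF BR_I_ideal] .

lemma tmono_Lambda: "a \<in> BR_I \<sigma> H J k \<Longrightarrow> int n dvd k \<Longrightarrow> tmono k a \<in> Lambda \<sigma> H J n"
proof -
  assume a: "a \<in> BR_I \<sigma> H J k" "int n dvd k"
  have "{j. tmono k a j \<noteq> 0} \<subseteq> {k}" by (auto simp: tmono_def)
  then have "finsupp (tmono k a)" unfolding finsupp_def using finite_subset by blast
  then show ?thesis unfolding Lambda_def using a BR_I_0 by (auto simp: tmono_def)
qed

lemma tmono0_Lambda: "tmono 0 r \<in> Lambda \<sigma> H J n"
  by (rule tmono_Lambda) (auto simp: BR_I_def)

end


definition tp :: "('v \<Rightarrow> 'v) \<Rightarrow> int \<Rightarrow> 'v \<Rightarrow> 'v" where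
  "tp \<theta> k = (if 0 \<le> k then \<theta> ^^ nat k else (inv \<theta>) ^^ nat (- k))"

lemma tp_succ: assumes "bij \<theta>" shows "tp \<theta> (k + 1) v = \<theta> (tp \<theta> k v)"
proof -
  have fi: "\<theta> (inv \<theta> x) = x" for x using assms by (simp add: bij_is_surj surj_f_inv_f)
  consider "0 \<le> k" | "k = -1" | "k < -1" by linarith
  then show ?thesis
  proof cases
    case 1
    then have "nat (k + 1) = Suc (nat k)" by simp
    then show ?thesis using 1 by (simp add: tp_def)
  next
    case 2
    then show ?thesis by (simp add: tp_def fi)
  next
    case 3
    define m where "m = nat (- k) - 1"
    have e1: "nat (- k) = Suc m" using 3 by (simp add: m_def)
    have e2: "nat (- (k + 1)) = m" using 3 by (simp add: m_def)
    have "tp \<theta> (k + 1) v = (inv \<theta> ^^ m) v" using 3 e2 by (simp add: tp_def)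
    moreover have "tp \<theta> k v = inv \<theta> ((inv \<theta> ^^ m) v)" using 3 e1 by (simp add: tp_def)
    ultimately show ?thesis by (simp add: fi)
  qed
qed

lemma tp_pred: assumes "bij \<theta>" shows "tp \<theta> (k - 1) v = inv \<theta> (tp \<theta> k v)"
proof -
  have "tp \<theta> k v = \<theta> (tp \<theta> (k - 1) v)" using tp_succ[OF assms, of "k - 1"] by simp
  then show ?thesis using assms by (simp add: bij_is_inj inv_f_f)
qed

lemma tp_0[simp]: "tp \<theta> 0 v = v" by (simp add: tp_def)
lemma tp_1: "tp \<theta> 1 v = \<theta> v" by (simp add: tp_def)
lemma tp_m1: "tp \<theta> (-1) v = inv \<theta> v" by (simp add: tp_def)

lemma tp_add: assumes "bij \<theta>" shows "tp \<theta> (a + b) v = tp \<theta> a (tp \<theta> b v)"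
proof (induction a rule: int_induct[where k=0])
  case base then show ?case by simp
next
  case (step1 i)
  have "tp \<theta> (i + 1 + b) v = \<theta> (tp \<theta> (i + b) v)" using tp_succ[OF assms, of "i + b"] by (simp add: ac_simps)
  then show ?case using step1 tp_succ[OF assms] by simp
next
  case (step2 i)
  have "tp \<theta> (i - 1 + b) v = inv \<theta> (tp \<theta> (i + b) v)" using tp_pred[OF assms, of "i + b"] by (simp add: algebra_simps)
  then show ?case using step2 tp_pred[OF assms] by simp
qed

lemma lin_aut_inv:
  assumes "lin_aut rmul \<theta>" shows "lin_aut rmul (inv \<theta>)"
proof -
  have b: "bij \<theta>" and ad: "\<And>v w. \<theta> (v + w) = \<theta> v + \<theta> w" and cm: "\<And>r v. \<theta> (rmul r v) = rmul r (\<theta> v)"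
    using assms by (auto simp: lin_aut_def)
  have fi: "\<theta> (inv \<theta> x) = x" for x using b by (simp add: bij_is_surj surj_f_inv_f)
  have if': "inv \<theta> (\<theta> x) = x" for x using b by (simp add: bij_is_inj inv_f_f)
  show ?thesis unfolding lin_aut_def
  proof (intro conjI allI)
    show "bij (inv \<theta>)" using b by (simp add: bij_imp_bij_inv)
    fix v w
    show "inv \<theta> (v + w) = inv \<theta> v + inv \<theta> w"
      using if'[of "inv \<theta> v + inv \<theta> w"] ad[of "inv \<theta> v" "inv \<theta> w"] fi by simp
  next
    fix r v
    show "inv \<theta> (rmul r v) = rmul r (inv \<theta> v)"
      using if'[of "rmul r (inv \<theta> v)"] cm[of r "inv \<theta> v"] fi by simp
  qed
qed

lemma lin_aut_pow:
  assumes "lin_aut rmul \<theta>" shows "lin_aut rmul (\<theta> ^^ m)"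
proof (induction m)
  case 0 then show ?case by (simp add: lin_aut_def bij_id[unfolded id_def])
next
  case (Suc m)
  then show ?case using assms bij_fn[of \<theta> "Suc m"] unfolding lin_aut_def by simp
qed

lemma lin_aut_tp: "lin_aut rmul \<theta> \<Longrightarrow> lin_aut rmul (tp \<theta> k)"
  by (simp add: tp_def lin_aut_pow lin_aut_inv)

lemma lin_addD: "lin_aut rmul \<theta> \<Longrightarrow> \<theta> (v + w) = \<theta> v + \<theta> w" by (simp add: lin_aut_def)
lemma lin_cmD: "lin_aut rmul \<theta> \<Longrightarrow> \<theta> (rmul r v) = rmul r (\<theta> v)" by (simp add: lin_aut_def)
lemma lin_bijD: "lin_aut rmul \<theta> \<Longrightarrow> bij \<theta>" by (simp add: lin_aut_def)

lemma lin_zero: "lin_aut rmul \<theta> \<Longrightarrow> \<theta> 0 = (0::'v::ab_group_add)"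
  using lin_addD[of rmul \<theta> 0 0] by simp

lemma lin_sum: "lin_aut rmul \<theta> \<Longrightarrow> \<theta> (sum g S) = (\<Sum>x\<in>S. \<theta> (g x))"
  using sum_comp_morphism[of \<theta> g S] lin_zero[of rmul \<theta>] lin_addD[of rmul \<theta>] by (simp add: o_def)

locale RMs =
  fixes M :: "'a::comm_ring_1 set" and rmul :: "'a \<Rightarrow> 'v::ab_group_add \<Rightarrow> 'v"
  assumes RM: "RM_space M rmul"
begin

lemma one[simp]: "rmul 1 v = v" using RM by (simp add: RM_space_def)
lemma ladd: "rmul (a + b) v = rmul a v + rmul b v" using RM by (simp add: RM_space_def)
lemma radd: "rmul a (v + w) = rmul a v + rmul a w" using RM by (simp add: RM_space_def)
lemma mult: "rmul (a * b) v = rmul a (rmul b v)" using RM by (simp add: RM_space_def)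
lemma annM: "x \<in> M \<Longrightarrow> rmul x v = 0" using RM by (simp add: RM_space_def)
lemma lzero[simp]: "rmul 0 v = 0" using ladd[of 0 0 v] by simp
lemma rzero[simp]: "rmul a 0 = 0" using radd[of a 0 0] by simp
lemma rsum: "rmul a (sum g S) = (\<Sum>x\<in>S. rmul a (g x))"
  using sum_comp_morphism[of "rmul a" g S] radd by (simp add: o_def)
lemma lsum: "rmul (sum g S) v = (\<Sum>x\<in>S. rmul (g x) v)"
  using sum_comp_morphism[of "\<lambda>a. rmul a v" g S] ladd by (simp add: o_def)

end


locale BRV = BR \<sigma> H J n M + RMs M rmul
  for \<sigma> :: "'a::idom \<Rightarrow> 'a" and H J n M and rmul :: "'a \<Rightarrow> 'v::ab_group_add \<Rightarrow> 'v" +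
  fixes \<theta> :: "'v \<Rightarrow> 'v"
  assumes lin: "lin_aut rmul \<theta>"
begin

definition actD :: "(int \<Rightarrow> 'a) \<Rightarrow> 'v \<Rightarrow> 'v" where
  "actD f v = (\<Sum>k\<in>{k. f k \<noteq> 0}. rmul (f k) (tp \<theta> (k div int n) v))"

lemma actD_sup:
  assumes "finite S" "{k. f k \<noteq> 0} \<subseteq> S"
  shows "actD f v = (\<Sum>k\<in>S. rmul (f k) (tp \<theta> (k div int n) v))"
  unfolding actD_def
  by (rule sum.mono_neutral_left[OF assms]) auto

lemma actD_add:
  assumes "finsupp f" "finsupp g"
  shows "actD (skew_add f g) v = actD f v + actD g v"
proof -
  let ?S = "{k. f k \<noteq> 0} \<union> {k. g k \<noteq> 0}"
  have fin: "finite ?S" using assms by (simp add: finsupp_def)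
  have "actD (skew_add f g) v = (\<Sum>k\<in>?S. rmul (skew_add f g k) (tp \<theta> (k div int n) v))"
    by (rule actD_sup[OF fin]) (auto simp: skew_add_def)
  also have "\<dots> = (\<Sum>k\<in>?S. rmul (f k) (tp \<theta> (k div int n) v)) + (\<Sum>k\<in>?S. rmul (g k) (tp \<theta> (k div int n) v))"
    by (simp add: skew_add_def ladd sum.distrib)
  also have "\<dots> = actD f v + actD g v"
    using actD_sup[OF fin, of f v] actD_sup[OF fin, of g v] by auto
  finally show ?thesis .
qed

lemma actD_vadd: "actD f (v + w) = actD f v + actD f w"
  unfolding actD_def using lin_addD[OF lin_aut_tp[OF lin]] by (simp add: radd sum.distrib)

lemma actD_mono: "actD (tmono k a) v = rmul a (tp \<theta> (k div int n) v)"
proof -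
  have "actD (tmono k a) v = (\<Sum>j\<in>{k}. rmul (tmono k a j) (tp \<theta> (j div int n) v))"
    by (rule actD_sup) (auto simp: tmono_def)
  then show ?thesis by (simp add: tmono_def)
qed

lemma Lambda_fin: "f \<in> Lambda \<sigma> H J n \<Longrightarrow> finite {k. f k \<noteq> 0}"
  by (simp add: Lambda_def finsupp_def)

lemma Lambda_dvd: "f \<in> Lambda \<sigma> H J n \<Longrightarrow> f k \<noteq> 0 \<Longrightarrow> int n dvd k"
  by (auto simp: Lambda_def)

lemma actD_mult:
  assumes f: "f \<in> Lambda \<sigma> H J n" and g: "g \<in> Lambda \<sigma> H J n"
  shows "actD (skew_mult \<sigma> f g) v = actD f (actD g v)"
proof -
  define Sf where "Sf = {k. f k \<noteq> 0}"
  define Sg where "Sg = {k. g k \<noteq> 0}"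
  have fSf: "finite Sf" and fSg: "finite Sg" using Lambda_fin f g by (auto simp: Sf_def Sg_def)
  define T where "T = (\<lambda>k. tp \<theta> (k div int n) v)"
  have fg: "skew_mult \<sigma> f g k = (\<Sum>i\<in>Sf. f i * g (k - i))" for k
    unfolding skew_mult_def Sf_def
    by (rule sum.cong) (auto simp: spow_dvd Lambda_dvd[OF f])
  define S where "S = (\<lambda>(i, j). i + j) ` (Sf \<times> Sg)"
  have fS: "finite S" using fSf fSg by (simp add: S_def)
  have supp: "{k. skew_mult \<sigma> f g k \<noteq> 0} \<subseteq> S"
  proof
    fix k assume "k \<in> {k. skew_mult \<sigma> f g k \<noteq> 0}"
    then have "(\<Sum>i\<in>Sf. f i * g (k - i)) \<noteq> 0" using fg by simp
    then obtain i where "i \<in> Sf" "f i * g (k - i) \<noteq> 0" by (meson sum.neutral)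
    then have "k - i \<in> Sg" by (simp add: Sg_def)
    then show "k \<in> S" unfolding S_def using \<open>i \<in> Sf\<close>
      by (intro image_eqI[of _ _ "(i, k - i)"]) auto
  qed
  have "actD (skew_mult \<sigma> f g) v = (\<Sum>k\<in>S. rmul (skew_mult \<sigma> f g k) (T k))"
    unfolding T_def by (rule actD_sup[OF fS supp])
  also have "\<dots> = (\<Sum>k\<in>S. \<Sum>i\<in>Sf. rmul (f i * g (k - i)) (T k))"
    by (simp add: fg lsum)
  also have "\<dots> = (\<Sum>i\<in>Sf. \<Sum>k\<in>S. rmul (f i * g (k - i)) (T k))"
    by (rule sum.swap)
  also have "\<dots> = (\<Sum>i\<in>Sf. \<Sum>j\<in>Sg. rmul (f i * g j) (T (i + j)))"
  proof (rule sum.cong[OF refl])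
    fix i assume i: "i \<in> Sf"
    have inj: "inj_on (\<lambda>j. i + j) Sg" by (simp add: inj_on_def)
    have sub: "(\<lambda>j. i + j) ` Sg \<subseteq> S" unfolding S_def using i by auto
    have "(\<Sum>j\<in>Sg. rmul (f i * g j) (T (i + j))) = (\<Sum>k\<in>(\<lambda>j. i + j) ` Sg. rmul (f i * g (k - i)) (T k))"
      by (simp add: sum.reindex[OF inj])
    also have "\<dots> = (\<Sum>k\<in>S. rmul (f i * g (k - i)) (T k))"
    proof (rule sum.mono_neutral_left[OF fS sub], rule ballI)
      fix k assume "k \<in> S - (\<lambda>j. i + j) ` Sg"
      then have "k - i \<notin> Sg" by (auto intro: image_eqI[of _ _ "k - i"])
      then show "rmul (f i * g (k - i)) (T k) = 0" by (simp add: Sg_def)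
    qed
    finally show "(\<Sum>k\<in>S. rmul (f i * g (k - i)) (T k)) = (\<Sum>j\<in>Sg. rmul (f i * g j) (T (i + j)))" by simp
  qed
  also have "\<dots> = actD f (actD g v)"
  proof -
    have ltp: "lin_aut rmul (tp \<theta> k)" for k using lin_aut_tp[OF lin] .
    have "actD f (actD g v) = (\<Sum>i\<in>Sf. rmul (f i) (tp \<theta> (i div int n) (\<Sum>j\<in>Sg. rmul (g j) (T j))))"
      unfolding actD_def Sf_def Sg_def T_def by simp
    also have "\<dots> = (\<Sum>i\<in>Sf. \<Sum>j\<in>Sg. rmul (f i * g j) (T (i + j)))"
    proof (rule sum.cong[OF refl])
      fix i assume i: "i \<in> Sf"
      have dv: "int n dvd i" using i Lambda_dvd[OF f] by (simp add: Sf_def)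
      have "(i + j) div int n = i div int n + j div int n" for j
      proof -
        obtain c where c: "i = int n * c" using dv by (auto elim: dvdE)
        have "(i + j) div int n = (j + c * int n) div int n" by (simp add: c ac_simps)
        also have "\<dots> = j div int n + c" using npos by simp
        finally show ?thesis using npos by (simp add: c)
      qed
      then have "T (i + j) = tp \<theta> (i div int n) (T j)" for j
        unfolding T_def using tp_add[OF lin_bijD[OF lin]] by simp
      then show "rmul (f i) (tp \<theta> (i div int n) (\<Sum>j\<in>Sg. rmul (g j) (T j))) = (\<Sum>j\<in>Sg. rmul (f i * g j) (T (i + j)))"
        by (simp add: lin_sum[OF ltp] lin_cmD[OF ltp] rsum mult)
    qed
    finally show ?thesis by simp
  qed
  finally show ?thesis .
qed

lemma actD_ext: "x \<in> ext_ideal \<sigma> H J n M \<Longrightarrow> finsupp x \<and> (\<forall>v. actD x v = 0)"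
proof (induction rule: ext_ideal.induct)
  case zero
  then show ?case by (simp add: finsupp_def actD_def)
next
  case (gen x f)
  have e: "skew_mult \<sigma> (tmono 0 x) f = (\<lambda>k. x * f k)" by (rule mono_scal)
  have fin: "finite {k. f k \<noteq> 0}" using Lambda_fin gen by blast
  have sub: "{k. x * f k \<noteq> 0} \<subseteq> {k. f k \<noteq> 0}" by auto
  have "finsupp (\<lambda>k. x * f k)" unfolding finsupp_def using finite_subset[OF sub fin] .
  moreover have "actD (\<lambda>k. x * f k) v = 0" for v
  proof -
    have "actD (\<lambda>k. x * f k) v = (\<Sum>k\<in>{k. f k \<noteq> 0}. rmul (x * f k) (tp \<theta> (k div int n) v))"
      by (rule actD_sup[OF fin sub])
    also have "\<dots> = 0" by (simp add: mult annM[OF gen(1)])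
    finally show ?thesis .
  qed
  ultimately show ?case by (simp add: e)
next
  case (add a b)
  then have "finsupp (skew_add a b)" unfolding finsupp_def skew_add_def
    by (rule_tac finite_subset[of _ "{k. a k \<noteq> 0} \<union> {k. b k \<noteq> 0}"]) auto
  then show ?case using add actD_add by simp
qed

lemma part2: "quot_module \<sigma> H J n M actD \<and> (\<forall>r v. actD (tmono 0 r) v = rmul r v) \<and>
               theta_acts \<sigma> H J n actD rmul \<theta>"
proof (intro conjI allI)
  show "actD (tmono 0 r) v = rmul r v" for r v by (simp add: actD_mono)
  show "theta_acts \<sigma> H J n actD rmul \<theta>"
  proof -
    have "- int n div int n = -1" using npos by (simp add: zdiv_zminus1_eq_if)
    then show ?thesis unfolding theta_acts_def using npos by (simp add: actD_mono tp_1 tp_m1)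
  qed
  show "quot_module \<sigma> H J n M actD"
    unfolding quot_module_def Lambda_module_def
    using actD_ext actD_add actD_vadd actD_mult
    by (auto simp: actD_mono Lambda_def)
qed

end


locale BRA = BR \<sigma> H J n M
  for \<sigma> :: "'a::idom \<Rightarrow> 'a" and H J n M +
  fixes act :: "(int \<Rightarrow> 'a) \<Rightarrow> 'v::ab_group_add \<Rightarrow> 'v"
  assumes qm: "quot_module \<sigma> H J n M act"
begin

abbreviation "rm r \<equiv> act (tmono 0 r)"
abbreviation "LL \<equiv> Lambda \<sigma> H J n"

lemma act_one: "act (tmono 0 1) v = v" using qm by (simp add: quot_module_def Lambda_module_def)
lemma act_add: "f \<in> LL \<Longrightarrow> g \<in> LL \<Longrightarrow> act (skew_add f g) v = act f v + act g v"
  using qm by (simp add: quot_module_def Lambda_module_def)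
lemma act_vadd: "f \<in> LL \<Longrightarrow> act f (v + w) = act f v + act f w"
  using qm by (simp add: quot_module_def Lambda_module_def)
lemma act_mult: "f \<in> LL \<Longrightarrow> g \<in> LL \<Longrightarrow> act (skew_mult \<sigma> f g) v = act f (act g v)"
  using qm by (simp add: quot_module_def Lambda_module_def)
lemma act_ann: "f \<in> ext_ideal \<sigma> H J n M \<Longrightarrow> act f v = 0"
  using qm by (simp add: quot_module_def)
lemma act_vzero: "f \<in> LL \<Longrightarrow> act f 0 = 0"
  using act_vadd[of f 0 0] by simp

lemma rm_RM: "RM_space M rm"
  unfolding RM_space_def
proof (intro conjI allI ballI)
  show "rm 1 v = v" for v by (rule act_one)
  show "rm (a + b) v = rm a v + rm b v" for a b v
    using act_add[OF tmono0_Lambda tmono0_Lambda, of a b v] by (simp add: add_mono)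
  show "rm a (v + w) = rm a v + rm a w" for a v w by (rule act_vadd[OF tmono0_Lambda])
  show "rm (a * b) v = rm a (rm b v)" for a b v
    using act_mult[OF tmono0_Lambda tmono0_Lambda, of a b v] by (simp add: mono_mono spow_def)
  fix x v assume "x \<in> M"
  then have "skew_mult \<sigma> (tmono 0 x) (tmono 0 1) \<in> ext_ideal \<sigma> H J n M"
    by (rule ext_ideal.gen) (rule tmono0_Lambda)
  then show "rm x v = 0" using act_ann by (simp add: mono_mono spow_def)
qed

sublocale R: RMs M rm by (rule RMs.intro[OF rm_RM])

lemma IM: "is_ideal M" using Mmax by (rule max_ideal)

lemma rm_unit: "y - 1 \<in> M \<Longrightarrow> rm y v = v"
  using R.ladd[of "y - 1" 1 v] R.annM[of "y - 1" v] by simp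

lemma rm_unit_mult: "y - 1 \<in> M \<Longrightarrow> rm (y * a) v = rm a v"
  by (simp add: R.mult rm_unit)

lemma rm_comm: "rm a (rm b v) = rm b (rm a v)"
  by (metis R.mult mult.commute)

lemma mono_L: "a \<in> BR_I \<sigma> H J k \<Longrightarrow> int n dvd k \<Longrightarrow> tmono k a \<in> LL" by (rule tmono_Lambda)

lemma mono_comm:
  assumes "a \<in> BR_I \<sigma> H J k" "int n dvd k"
  shows "act (tmono k a) (rm r v) = rm r (act (tmono k a) v)"
proof -
  have "act (tmono k a) (rm r v) = act (skew_mult \<sigma> (tmono k a) (tmono 0 r)) v"
    using act_mult[OF mono_L[OF assms] tmono0_Lambda] by simp
  also have "\<dots> = act (tmono k (r * a)) v" using assms(2) by (simp add: mono_mono_dvd mult.commute)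
  also have "\<dots> = act (skew_mult \<sigma> (tmono 0 r) (tmono k a)) v" by (simp add: mono_mono spow_def)
  also have "\<dots> = rm r (act (tmono k a) v)" using act_mult[OF tmono0_Lambda mono_L[OF assms]] by simp
  finally show ?thesis .
qed

lemma scal_mono:
  assumes "a \<in> BR_I \<sigma> H J k" "int n dvd k"
  shows "act (tmono k (r * a)) v = rm r (act (tmono k a) v)"
proof -
  have "act (tmono k (r * a)) v = act (skew_mult \<sigma> (tmono 0 r) (tmono k a)) v" by (simp add: mono_mono spow_def)
  also have "\<dots> = rm r (act (tmono k a) v)" using act_mult[OF tmono0_Lambda mono_L[OF assms]] by simp
  finally show ?thesis .
qed

lemma replace:
  assumes "x - 1 \<in> M" "a \<in> BR_I \<sigma> H J k" "int n dvd k"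
  shows "act (tmono k (x * a)) v = act (tmono k a) v"
proof -
  have I: "is_ideal (BR_I \<sigma> H J k)" by (rule BR_I_ideal)
  have m2: "tmono k ((x - 1) * a) \<in> LL" by (rule mono_L[OF idealD(4)[OF I assms(2)] assms(3)])
  have "tmono k (x * a) = skew_add (tmono k a) (tmono k ((x - 1) * a))"
    by (simp add: add_mono algebra_simps)
  then have "act (tmono k (x * a)) v = act (tmono k a) v + act (tmono k ((x - 1) * a)) v"
    using act_add[OF mono_L[OF assms(2,3)] m2] by simp
  moreover have "skew_mult \<sigma> (tmono 0 (x - 1)) (tmono k a) \<in> ext_ideal \<sigma> H J n M"
    by (rule ext_ideal.gen[OF assms(1) mono_L[OF assms(2,3)]])
  then have "act (tmono k ((x - 1) * a)) v = 0" using act_ann by (simp add: mono_mono spow_def)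
  ultimately show ?thesis by simp
qed

end


context BR begin

definition "a0 = (SOME a. a \<in> BR_I \<sigma> H J (int n) \<and> a \<notin> M)"
definition "b0 = (SOME b. b \<in> BR_I \<sigma> H J (- int n) \<and> b \<notin> M)"
definition "ca = (SOME c. c * a0 - 1 \<in> M)"
definition "cb = (SOME c. c * b0 - 1 \<in> M)"

lemma a0: "a0 \<in> BR_I \<sigma> H J (int n)" "a0 \<notin> M"
  using someI_ex[OF a0ex] by (auto simp: a0_def)
lemma b0: "b0 \<in> BR_I \<sigma> H J (- int n)" "b0 \<notin> M"
  using someI_ex[OF b0ex] by (auto simp: b0_def)
lemma ca: "ca * a0 - 1 \<in> M"
  using someI_ex[OF max_inv[OF Mmax a0(2)]] by (simp add: ca_def)
lemma cb: "cb * b0 - 1 \<in> M"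
  using someI_ex[OF max_inv[OF Mmax b0(2)]] by (simp add: cb_def)
lemma dvdn: "int n dvd int n" "int n dvd - int n" by auto

lemma unit_prod: "(ca * a0) * (cb * b0) - 1 \<in> M"
proof -
  have IM: "is_ideal M" using Mmax by (rule max_ideal)
  have "(ca * a0) * (cb * b0) - 1 = (ca * a0 - 1) * (cb * b0) + (cb * b0 - 1)" by (simp add: algebra_simps)
  show ?thesis unfolding \<open>(ca * a0) * (cb * b0) - 1 = _\<close> by (rule idealD(2)[OF IM idealD(5)[OF IM ca] cb])
qed

end

context BRA begin

definition "thA v = rm ca (act (tmono (int n) a0) v)"
definition "thB v = rm cb (act (tmono (- int n) b0) v)"

lemma thA_acts: "a \<in> BR_I \<sigma> H J (int n) \<Longrightarrow> act (tmono (int n) a) v = rm a (thA v)"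
proof -
  assume a: "a \<in> BR_I \<sigma> H J (int n)"
  have "act (tmono (int n) a) v = act (tmono (int n) ((ca * a0) * a)) v"
    using replace[OF ca a dvdn(1)] by simp
  also have "\<dots> = act (tmono (int n) ((ca * a) * a0)) v" by (simp add: ac_simps)
  also have "\<dots> = rm (ca * a) (act (tmono (int n) a0) v)" by (rule scal_mono[OF a0(1) dvdn(1)])
  also have "\<dots> = rm a (thA v)" by (simp add: thA_def R.mult ac_simps)
  finally show ?thesis .
qed

lemma thB_acts: "b \<in> BR_I \<sigma> H J (- int n) \<Longrightarrow> act (tmono (- int n) b) v = rm b (thB v)"
proof -
  assume a: "b \<in> BR_I \<sigma> H J (- int n)"
  have "act (tmono (- int n) b) v = act (tmono (- int n) ((cb * b0) * b)) v"
    using replace[OF cb a dvdn(2)] by simp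
  also have "\<dots> = act (tmono (- int n) ((cb * b) * b0)) v" by (simp add: ac_simps)
  also have "\<dots> = rm (cb * b) (act (tmono (- int n) b0) v)" by (rule scal_mono[OF b0(1) dvdn(2)])
  also have "\<dots> = rm b (thB v)" by (simp add: thB_def R.mult ac_simps)
  finally show ?thesis .
qed

lemma thAB: "thA (thB v) = v"
proof -
  have "thA (thB v) = rm ca (rm cb (act (tmono (int n) a0) (act (tmono (- int n) b0) v)))"
    by (simp add: thA_def thB_def mono_comm[OF a0(1) dvdn(1)])
  also have "act (tmono (int n) a0) (act (tmono (- int n) b0) v) = rm (a0 * b0) v"
    using act_mult[OF mono_L[OF a0(1) dvdn(1)] mono_L[OF b0(1) dvdn(2)], of v]
    by (simp add: mono_mono_dvd)
  also have "rm ca (rm cb (rm (a0 * b0) v)) = rm ((ca * a0) * (cb * b0)) v"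
  proof -
    have "ca * (cb * (a0 * b0)) = (ca * a0) * (cb * b0)" by (simp add: ac_simps)
    then show ?thesis by (simp only: R.mult[symmetric])
  qed
  also have "\<dots> = v" by (rule rm_unit[OF unit_prod])
  finally show ?thesis .
qed

lemma thBA: "thB (thA v) = v"
proof -
  have "thB (thA v) = rm cb (rm ca (act (tmono (- int n) b0) (act (tmono (int n) a0) v)))"
    by (simp add: thA_def thB_def mono_comm[OF b0(1) dvdn(2)])
  also have "act (tmono (- int n) b0) (act (tmono (int n) a0) v) = rm (b0 * a0) v"
    using act_mult[OF mono_L[OF b0(1) dvdn(2)] mono_L[OF a0(1) dvdn(1)], of v]
    by (simp add: mono_mono_dvd)
  also have "rm cb (rm ca (rm (b0 * a0) v)) = rm ((ca * a0) * (cb * b0)) v"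
  proof -
    have "cb * (ca * (b0 * a0)) = (ca * a0) * (cb * b0)" by (simp add: ac_simps)
    then show ?thesis by (simp only: R.mult[symmetric])
  qed
  also have "\<dots> = v" by (rule rm_unit[OF unit_prod])
  finally show ?thesis .
qed

lemma thA_bij: "bij thA"
  using thAB thBA by (metis bijI' )

lemma thA_inv: "inv thA = thB"
  by (rule inv_unique_comp) (auto simp: fun_eq_iff thAB thBA)

lemma thA_lin: "lin_aut rm thA"
  unfolding lin_aut_def
proof (intro conjI allI)
  show "bij thA" by (rule thA_bij)
  fix v w show "thA (v + w) = thA v + thA w"
    by (simp add: thA_def act_vadd[OF mono_L[OF a0(1) dvdn(1)]] R.radd)
next
  fix r v show "thA (rm r v) = rm r (thA v)"
    by (simp add: thA_def mono_comm[OF a0(1) dvdn(1)] rm_comm)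
qed

lemma part1: "\<exists>\<theta>. lin_aut rm \<theta> \<and> theta_acts \<sigma> H J n act rm \<theta>"
  using thA_lin thA_acts thB_acts thA_inv unfolding theta_acts_def by auto

end


lemma BR_I_pos: "BR_I \<sigma> H J (int m) = Ipos \<sigma> J m" by (simp add: BR_I_def)
lemma BR_I_neg: "BR_I \<sigma> H J (- int m) = Ineg \<sigma> H m"
proof (cases m)
  case 0 then show ?thesis by (simp add: BR_I_def)
next
  case (Suc k)
  then have "\<not> 0 \<le> - int m" "nat (- (- int m)) = m" by simp_all
  then show ?thesis unfolding BR_I_def by (simp del: Ineg.simps)
qed

lemma lin_neg: "lin_aut rmul \<theta> \<Longrightarrow> \<theta> (- v) = - \<theta> (v::'v::ab_group_add)"
  using lin_addD[of rmul \<theta> v "- v"] lin_zero[of rmul \<theta>] by (metis add.right_inverse minus_unique)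

locale BRT = BRA \<sigma> H J n M act
  for \<sigma> :: "'a::idom \<Rightarrow> 'a" and H J n M and act :: "(int \<Rightarrow> 'a) \<Rightarrow> 'v::ab_group_add \<Rightarrow> 'v" +
  fixes \<theta> :: "'v \<Rightarrow> 'v"
  assumes lin: "lin_aut rm \<theta>" and ta: "theta_acts \<sigma> H J n act rm \<theta>"
begin

lemma th_pos: "a \<in> BR_I \<sigma> H J (int n) \<Longrightarrow> act (tmono (int n) a) v = rm a (\<theta> v)"
  using ta by (simp add: theta_acts_def)
lemma th_neg: "b \<in> BR_I \<sigma> H J (- int n) \<Longrightarrow> act (tmono (- int n) b) v = rm b (inv \<theta> v)"
  using ta by (simp add: theta_acts_def)

lemma bijt: "bij \<theta>" using lin by (rule lin_bijD)
lemma lini: "lin_aut rm (inv \<theta>)" using lin by (rule lin_aut_inv)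
lemma lintp: "lin_aut rm (tp \<theta> k)" using lin by (rule lin_aut_tp)

lemma th_expr: "\<theta> v = rm ca (act (tmono (int n) a0) v)"
  using th_pos[OF a0(1), of v] rm_unit[OF ca, of "\<theta> v"] R.mult[of ca a0 "\<theta> v"] by simp

lemma mono_pos: "a \<in> BR_I \<sigma> H J (int p * int n) \<Longrightarrow> act (tmono (int p * int n) a) v = rm a (tp \<theta> (int p) v)"
proof (induction p arbitrary: a v)
  case 0 then show ?case by simp
next
  case (Suc p)
  define k where "k = int (Suc p) * int n"
  have k2: "k = int n + int p * int n" by (simp add: k_def algebra_simps)
  have dk: "int n dvd k" by (simp add: k_def)
  have ak: "a \<in> BR_I \<sigma> H J k" using Suc.prems by (simp add: k_def)
  have ap: "a \<in> BR_I \<sigma> H J (int p * int n)"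
  proof -
    have "Ipos \<sigma> J (Suc p * n) \<subseteq> Ipos \<sigma> J (p * n)" by (rule Ipos_anti) simp
    then show ?thesis using ak unfolding k_def
      by (metis BR_I_pos of_nat_mult subsetD)
  qed
  have I: "is_ideal (BR_I \<sigma> H J k)" by (rule BR_I_ideal)
  have "act (tmono k (a0 * a)) v = act (skew_mult \<sigma> (tmono (int n) a0) (tmono (int p * int n) a)) v"
    by (simp add: mono_mono_dvd k2)
  also have "\<dots> = act (tmono (int n) a0) (act (tmono (int p * int n) a) v)"
    by (rule act_mult[OF mono_L[OF a0(1) dvdn(1)] mono_L[OF ap]]) simp
  also have "\<dots> = rm (a0 * a) (tp \<theta> (int (Suc p)) v)"
  proof -
    have eq: "int (Suc p) = int p + 1" by simp
    have "tp \<theta> (int (Suc p)) v = \<theta> (tp \<theta> (int p) v)" unfolding eq by (rule tp_succ[OF bijt])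
    then show ?thesis using Suc.IH[OF ap] th_pos[OF a0(1)] lin_cmD[OF lin] by (simp add: R.mult del: of_nat_Suc)
  qed
  finally have e: "act (tmono k (a0 * a)) v = rm (a0 * a) (tp \<theta> (int (Suc p)) v)" .
  have "act (tmono k a) v = act (tmono k ((ca * a0) * a)) v" using replace[OF ca ak dk] by simp
  also have "\<dots> = act (tmono k (ca * (a0 * a))) v" by (simp add: ac_simps)
  also have "\<dots> = rm ca (act (tmono k (a0 * a)) v)" by (rule scal_mono[OF idealD(4)[OF I ak] dk])
  also have "\<dots> = rm ((ca * a0) * a) (tp \<theta> (int (Suc p)) v)" by (simp add: e R.mult)
  also have "\<dots> = rm a (tp \<theta> (int (Suc p)) v)" by (rule rm_unit_mult[OF ca])
  finally show ?case by (simp add: k_def)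
qed

lemma mono_neg: "a \<in> BR_I \<sigma> H J (- (int p * int n)) \<Longrightarrow> act (tmono (- (int p * int n)) a) v = rm a (tp \<theta> (- int p) v)"
proof (induction p arbitrary: a v)
  case 0 then show ?case by simp
next
  case (Suc p)
  define k where "k = - (int (Suc p) * int n)"
  have k2: "k = - int n + - (int p * int n)" by (simp add: k_def algebra_simps)
  have dk: "int n dvd k" by (simp add: k_def)
  have ak: "a \<in> BR_I \<sigma> H J k" using Suc.prems by (simp add: k_def)
  have dp: "int n dvd - (int p * int n)" by simp
  have ap: "a \<in> BR_I \<sigma> H J (- (int p * int n))"
  proof -
    have "Ineg \<sigma> H (Suc p * n) \<subseteq> Ineg \<sigma> H (p * n)" by (rule Ineg_anti) simp
    then show ?thesis using ak unfolding k_def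
      by (metis BR_I_neg of_nat_mult subsetD)
  qed
  have I: "is_ideal (BR_I \<sigma> H J k)" by (rule BR_I_ideal)
  have "act (tmono k (b0 * a)) v = act (skew_mult \<sigma> (tmono (- int n) b0) (tmono (- (int p * int n)) a)) v"
    by (simp add: mono_mono_dvd k2)
  also have "\<dots> = act (tmono (- int n) b0) (act (tmono (- (int p * int n)) a) v)"
    by (rule act_mult[OF mono_L[OF b0(1) dvdn(2)] mono_L[OF ap dp]])
  also have "\<dots> = rm (b0 * a) (tp \<theta> (- int (Suc p)) v)"
  proof -
    have eq: "- int (Suc p) = - int p - 1" by simp
    have "tp \<theta> (- int (Suc p)) v = inv \<theta> (tp \<theta> (- int p) v)" unfolding eq by (rule tp_pred[OF bijt])
    then show ?thesis using Suc.IH[OF ap] th_neg[OF b0(1)] lin_cmD[OF lini] by (simp add: R.mult del: of_nat_Suc)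
  qed
  finally have e: "act (tmono k (b0 * a)) v = rm (b0 * a) (tp \<theta> (- int (Suc p)) v)" .
  have "act (tmono k a) v = act (tmono k ((cb * b0) * a)) v" using replace[OF cb ak dk] by simp
  also have "\<dots> = act (tmono k (cb * (b0 * a))) v" by (simp add: ac_simps)
  also have "\<dots> = rm cb (act (tmono k (b0 * a)) v)" by (rule scal_mono[OF idealD(4)[OF I ak] dk])
  also have "\<dots> = rm ((cb * b0) * a) (tp \<theta> (- int (Suc p)) v)" by (simp add: e R.mult)
  also have "\<dots> = rm a (tp \<theta> (- int (Suc p)) v)" by (rule rm_unit_mult[OF cb])
  finally show ?case by (simp add: k_def)
qed

lemma mono_gen:
  assumes "a \<in> BR_I \<sigma> H J k" "int n dvd k"
  shows "act (tmono k a) v = rm a (tp \<theta> (k div int n) v)"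
proof -
  obtain q where q0: "k = int n * q" using assms(2) by (elim dvdE)
  then have q: "k = q * int n" by (simp add: mult.commute)
  have qd: "k div int n = q" using npos by (simp add: q)
  show ?thesis
  proof (cases "0 \<le> q")
    case True
    define p where "p = nat q"
    have "q = int p" using True by (simp add: p_def)
    then show ?thesis using mono_pos[of a p v] assms(1) q qd by simp
  next
    case False
    define p where "p = nat (- q)"
    have "q = - int p" using False by (simp add: p_def)
    then show ?thesis using mono_neg[of a p v] assms(1) q qd by simp
  qed
qed

lemma LF: "f \<in> LL \<Longrightarrow> finite {k. f k \<noteq> 0}"
  by (simp add: Lambda_def finsupp_def)

lemma LD: "f \<in> LL \<Longrightarrow> f k \<noteq> 0 \<Longrightarrow> int n dvd k"
  by (auto simp: Lambda_def)

lemma zeroL: "(\<lambda>_. 0) \<in> LL"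
  unfolding Lambda_def finsupp_def using BR_I_0 by auto

lemma act_zerof: "act (\<lambda>_. 0) v = 0"
proof -
  have "skew_add (\<lambda>_. 0) (\<lambda>_. (0::'a)) = (\<lambda>_. 0)" by (simp add: skew_add_def)
  then have "act (\<lambda>_. 0) v = act (\<lambda>_. 0) v + act (\<lambda>_. 0) v" using act_add[OF zeroL zeroL, of v] by simp
  then show ?thesis by simp
qed

lemma act_formula_aux:
  assumes "finite F"
  shows "\<forall>f\<in>LL. {k. f k \<noteq> 0} = F \<longrightarrow> act f v = (\<Sum>k\<in>F. rm (f k) (tp \<theta> (k div int n) v))"
  using assms
proof (induction F rule: finite_induct)
  case empty
  show ?case
  proof (intro ballI impI)
    fix f :: "int \<Rightarrow> 'a" assume "{k. f k \<noteq> 0} = {}"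
    then have "f = (\<lambda>_. 0)" by auto
    then show "act f v = (\<Sum>k\<in>{}. rm (f k) (tp \<theta> (k div int n) v))" using act_zerof by simp
  qed
next
  case (insert k F)
  show ?case
  proof (intro ballI impI)
    fix f assume fL: "f \<in> LL" and sf: "{k. f k \<noteq> 0} = insert k F"
    define g where "g = f(k := 0)"
    have fk: "f k \<noteq> 0" using sf by auto
    have dk: "int n dvd k" using LD[OF fL fk] .
    have ak: "f k \<in> BR_I \<sigma> H J k" using fL by (simp add: Lambda_def)
    have sg: "{j. g j \<noteq> 0} = F" using sf insert(2) by (auto simp: g_def)
    have gL: "g \<in> LL" using fL BR_I_0 insert(1) sg unfolding Lambda_def finsupp_def g_def by auto
    have ef: "f = skew_add (tmono k (f k)) g" by (auto simp: skew_add_def tmono_def g_def fun_eq_iff)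
    have "act f v = act (tmono k (f k)) v + act g v"
      by (subst ef, rule act_add[OF mono_L[OF ak dk] gL])
    also have "\<dots> = rm (f k) (tp \<theta> (k div int n) v) + (\<Sum>j\<in>F. rm (g j) (tp \<theta> (j div int n) v))"
      using mono_gen[OF ak dk] insert(3) gL sg by simp
    also have "(\<Sum>j\<in>F. rm (g j) (tp \<theta> (j div int n) v)) = (\<Sum>j\<in>F. rm (f j) (tp \<theta> (j div int n) v))"
      using insert(2) by (intro sum.cong) (auto simp: g_def)
    finally show "act f v = (\<Sum>j\<in>insert k F. rm (f j) (tp \<theta> (j div int n) v))"
      using insert(1,2) by simp
  qed
qed

lemma act_formula: "f \<in> LL \<Longrightarrow> act f v = (\<Sum>k\<in>{k. f k \<noteq> 0}. rm (f k) (tp \<theta> (k div int n) v))"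
  using act_formula_aux[OF LF] by blast

end


inductive_set fcl :: "('a \<Rightarrow> 'v::ab_group_add \<Rightarrow> 'v) \<Rightarrow> ('v \<Rightarrow> 'v) \<Rightarrow> 'v \<Rightarrow> 'v set"
  for rmul \<theta> w where
  fbase: "w \<in> fcl rmul \<theta> w"
| fadd: "v \<in> fcl rmul \<theta> w \<Longrightarrow> u \<in> fcl rmul \<theta> w \<Longrightarrow> v + u \<in> fcl rmul \<theta> w"
| fsm: "v \<in> fcl rmul \<theta> w \<Longrightarrow> rmul r v \<in> fcl rmul \<theta> w"
| fth: "v \<in> fcl rmul \<theta> w \<Longrightarrow> \<theta> v \<in> fcl rmul \<theta> w"

inductive_set bcl :: "('a \<Rightarrow> 'v::ab_group_add \<Rightarrow> 'v) \<Rightarrow> ('v \<Rightarrow> 'v) \<Rightarrow> 'v \<Rightarrow> 'v set"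
  for rmul \<theta> w where
  bbase: "w \<in> bcl rmul \<theta> w"
| badd: "v \<in> bcl rmul \<theta> w \<Longrightarrow> u \<in> bcl rmul \<theta> w \<Longrightarrow> v + u \<in> bcl rmul \<theta> w"
| bsm: "v \<in> bcl rmul \<theta> w \<Longrightarrow> rmul r v \<in> bcl rmul \<theta> w"
| bth: "v \<in> bcl rmul \<theta> w \<Longrightarrow> \<theta> v \<in> bcl rmul \<theta> w"
| bthi: "v \<in> bcl rmul \<theta> w \<Longrightarrow> inv \<theta> v \<in> bcl rmul \<theta> w"

definition sg :: "int \<Rightarrow> 'a::comm_ring_1" where "sg k = (if even k then 1 else -1)"

context RMs begin
lemma rneg: "rmul (-1) v = - v"
  using ladd[of "-1" 1 v] by (simp add: eq_neg_iff_add_eq_0)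
lemma ldiff: "rmul (a - b) v = rmul a v - rmul b v"
  using ladd[of "a - b" b v] by (simp add: algebra_simps)
lemma rminus: "rmul a (- v) = - rmul a v"
proof -
  have "rmul a v + rmul a (- v) = 0" using radd[of a v "- v"] by simp
  then show ?thesis using minus_unique by metis
qed
end

context BRT begin

lemma closed_sum:
  assumes "0 \<in> X" "\<And>x y. x \<in> X \<Longrightarrow> y \<in> X \<Longrightarrow> x + y \<in> X" "finite S" "\<forall>k\<in>S. g k \<in> X"
  shows "sum g S \<in> X"
  using assms(3,4) by (induction S rule: finite_induct) (auto intro: assms(1,2))

lemma closed_sub:
  assumes z: "0 \<in> X" and a: "\<And>x y. x \<in> X \<Longrightarrow> y \<in> X \<Longrightarrow> x + y \<in> X"
    and ng: "\<And>x. x \<in> X \<Longrightarrow> - x \<in> X"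
    and s: "\<And>r x. x \<in> X \<Longrightarrow> rm r x \<in> X" and t: "\<And>k x. x \<in> X \<Longrightarrow> tp \<theta> k x \<in> X"
  shows "submodule \<sigma> H J n act X"
  unfolding submodule_def
proof (intro conjI ballI)
  fix f v assume "f \<in> LL" "v \<in> X"
  then show "act f v \<in> X" unfolding act_formula[OF \<open>f \<in> LL\<close>]
    by (intro closed_sum[OF z a LF[OF \<open>f \<in> LL\<close>]] ballI s t)
qed (auto intro: z a ng)

lemma fcl_zero: "0 \<in> fcl rm \<theta> w" using fcl.fsm[OF fcl.fbase, where rmul=rm and \<theta>=\<theta> and v=w and r=0] by simp
lemma fcl_neg: "v \<in> fcl rm \<theta> w \<Longrightarrow> - v \<in> fcl rm \<theta> w" using fcl.fsm[where rmul=rm and \<theta>=\<theta> and w=w and v=v and r="-1"] by (simp add: R.rneg)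
lemma fcl_sum: "finite S \<Longrightarrow> \<forall>k\<in>S. g k \<in> fcl rm \<theta> w \<Longrightarrow> sum g S \<in> fcl rm \<theta> w"
  by (rule closed_sum[OF fcl_zero fcl.fadd])
lemma fcl_pow: "v \<in> fcl rm \<theta> w \<Longrightarrow> (\<theta> ^^ m) v \<in> fcl rm \<theta> w"
  by (induction m) (auto intro: fcl.fth)

lemma bcl_zero: "0 \<in> bcl rm \<theta> w" using bcl.bsm[OF bcl.bbase, where rmul=rm and \<theta>=\<theta> and v=w and r=0] by simp
lemma bcl_neg: "v \<in> bcl rm \<theta> w \<Longrightarrow> - v \<in> bcl rm \<theta> w" using bcl.bsm[where rmul=rm and \<theta>=\<theta> and w=w and v=v and r="-1"] by (simp add: R.rneg)
lemma bcl_tp: "v \<in> bcl rm \<theta> w \<Longrightarrow> tp \<theta> k v \<in> bcl rm \<theta> w"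
proof -
  assume v: "v \<in> bcl rm \<theta> w"
  have p1: "(\<theta> ^^ m) v \<in> bcl rm \<theta> w" for m by (induction m) (auto intro: bcl.bth v)
  have p2: "(inv \<theta> ^^ m) v \<in> bcl rm \<theta> w" for m by (induction m) (auto intro: bcl.bthi v)
  show ?thesis using p1 p2 by (simp add: tp_def)
qed
lemma bcl_sub: "submodule \<sigma> H J n act (bcl rm \<theta> w)"
  by (rule closed_sub[OF bcl_zero bcl.badd bcl_neg bcl.bsm bcl_tp])

end


lemma sum_if_sub:
  assumes "finite S" "A \<subseteq> S"
  shows "(\<Sum>k\<in>S. if k \<in> A then g k else 0) = sum g A"
proof -
  have e: "S \<inter> A = A" using assms(2) by blast
  have "sum g A = sum g (S \<inter> A)" by (simp only: e)
  also have "\<dots> = (\<Sum>k\<in>S. if k \<in> A then g k else 0)" by (rule sum.inter_restrict[OF assms(1)])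
  finally show ?thesis by simp
qed

lemma sg_shift: "odd s \<Longrightarrow> sg (j + s) = - (sg j :: 'a::comm_ring_1)"
  by (simp add: sg_def)

context BRT begin

definition "Inv w v \<longleftrightarrow> (\<exists>S d. finite S \<and> (\<Sum>k\<in>S. sg k * d k) = 0 \<and> v = (\<Sum>k\<in>S. rm (d k) (tp \<theta> k w)))"

lemma Inv_add:
  assumes "Inv w v1" "Inv w v2" shows "Inv w (v1 + v2)"
proof -
  obtain S1 d1 where 1: "finite S1" "(\<Sum>k\<in>S1. sg k * d1 k) = 0" "v1 = (\<Sum>k\<in>S1. rm (d1 k) (tp \<theta> k w))"
    using assms(1) unfolding Inv_def by blast
  obtain S2 d2 where 2: "finite S2" "(\<Sum>k\<in>S2. sg k * d2 k) = 0" "v2 = (\<Sum>k\<in>S2. rm (d2 k) (tp \<theta> k w))"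
    using assms(2) unfolding Inv_def by blast
  define S where "S = S1 \<union> S2"
  define d where "d k = (if k \<in> S1 then d1 k else 0) + (if k \<in> S2 then d2 k else 0)" for k
  have fS: "finite S" using 1 2 by (simp add: S_def)
  have "(\<Sum>k\<in>S. sg k * d k) = (\<Sum>k\<in>S. if k \<in> S1 then sg k * d1 k else 0) + (\<Sum>k\<in>S. if k \<in> S2 then sg k * d2 k else 0)"
  proof -
    have "sg k * d k = (if k \<in> S1 then sg k * d1 k else 0) + (if k \<in> S2 then sg k * d2 k else 0)" for k
      unfolding d_def by (simp add: distrib_left)
    then show ?thesis by (simp add: sum.distrib)
  qed
  also have "\<dots> = 0" using 1 2 fS by (simp add: sum_if_sub S_def)
  finally have s0: "(\<Sum>k\<in>S. sg k * d k) = 0" .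
  have "(\<Sum>k\<in>S. rm (d k) (tp \<theta> k w)) = (\<Sum>k\<in>S. if k \<in> S1 then rm (d1 k) (tp \<theta> k w) else 0) + (\<Sum>k\<in>S. if k \<in> S2 then rm (d2 k) (tp \<theta> k w) else 0)"
  proof -
    have "rm (d k) (tp \<theta> k w) = (if k \<in> S1 then rm (d1 k) (tp \<theta> k w) else 0) + (if k \<in> S2 then rm (d2 k) (tp \<theta> k w) else 0)" for k
      unfolding d_def by (simp add: R.ladd)
    then show ?thesis by (simp add: sum.distrib)
  qed
  also have "\<dots> = v1 + v2" using 1 2 fS by (simp add: sum_if_sub S_def)
  finally have "v1 + v2 = (\<Sum>k\<in>S. rm (d k) (tp \<theta> k w))" by simp
  then show ?thesis unfolding Inv_def using fS s0 by blast
qed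

lemma Inv_sm:
  assumes "Inv w v" shows "Inv w (rm r v)"
proof -
  obtain S d where 1: "finite S" "(\<Sum>k\<in>S. sg k * d k) = 0" "v = (\<Sum>k\<in>S. rm (d k) (tp \<theta> k w))"
    using assms unfolding Inv_def by blast
  have "(\<Sum>k\<in>S. sg k * (r * d k)) = (\<Sum>k\<in>S. r * (sg k * d k))"
    by (rule sum.cong) (simp_all add: mult.left_commute)
  also have "\<dots> = r * (\<Sum>k\<in>S. sg k * d k)" by (simp add: sum_distrib_left)
  finally have "(\<Sum>k\<in>S. sg k * (r * d k)) = r * (\<Sum>k\<in>S. sg k * d k)" .
  then have "(\<Sum>k\<in>S. sg k * (r * d k)) = 0" using 1 by simp
  moreover have "rm r v = (\<Sum>k\<in>S. rm (r * d k) (tp \<theta> k w))" using 1 by (simp add: R.rsum R.mult)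
  ultimately show ?thesis unfolding Inv_def
    by (intro exI[of _ S] exI[of _ "\<lambda>k. r * d k"]) (simp add: 1(1))
qed

lemma Inv_shift:
  assumes "Inv w v" "odd s" shows "Inv w (tp \<theta> s v)"
proof -
  obtain S d where 1: "finite S" "(\<Sum>k\<in>S. sg k * d k) = 0" "v = (\<Sum>k\<in>S. rm (d k) (tp \<theta> k w))"
    using assms unfolding Inv_def by blast
  define S' where "S' = (\<lambda>k. k + s) ` S"
  define d' where "d' k = d (k - s)" for k
  have inj: "inj_on (\<lambda>k. k + s) S" by (simp add: inj_on_def)
  have fS: "finite S'" using 1 by (simp add: S'_def)
  have "(\<Sum>k\<in>S'. sg k * d' k) = (\<Sum>j\<in>S. sg (j + s) * d j)"
    unfolding S'_def d'_def by (simp add: sum.reindex[OF inj])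
  also have "\<dots> = - (\<Sum>j\<in>S. sg j * d j)" using assms(2) by (simp add: sg_shift sum_negf)
  finally have s0: "(\<Sum>k\<in>S'. sg k * d' k) = 0" using 1 by simp
  have "tp \<theta> s v = (\<Sum>j\<in>S. rm (d j) (tp \<theta> s (tp \<theta> j w)))"
    using 1 by (simp add: lin_sum[OF lintp] lin_cmD[OF lintp])
  also have "\<dots> = (\<Sum>j\<in>S. rm (d j) (tp \<theta> (j + s) w))"
  proof (rule sum.cong[OF refl])
    fix j show "rm (d j) (tp \<theta> s (tp \<theta> j w)) = rm (d j) (tp \<theta> (j + s) w)"
      using tp_add[OF bijt, of s j w] by (simp add: add.commute)
  qed
  also have "\<dots> = (\<Sum>k\<in>S'. rm (d' k) (tp \<theta> k w))"
    unfolding S'_def d'_def by (simp add: sum.reindex[OF inj])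
  finally show ?thesis unfolding Inv_def using fS s0
    by (intro exI[of _ S'] exI[of _ d']) simp
qed

lemma Inv_base: "Inv w (w + \<theta> w)"
proof -
  have a: "(\<Sum>k\<in>{0::int, 1}. sg k * (1::'a)) = sg 0 + sg 1" by simp
  have b: "sg 0 + sg 1 = (0::'a)" by (simp add: sg_def)
  have c: "(\<Sum>k\<in>{0::int, 1}. rm 1 (tp \<theta> k w)) = rm 1 (tp \<theta> 0 w) + rm 1 (tp \<theta> 1 w)" by simp
  have d: "rm 1 (tp \<theta> 0 w) + rm 1 (tp \<theta> 1 w) = w + \<theta> w" by (simp add: tp_1)
  have "finite {0::int, 1} \<and> (\<Sum>k\<in>{0::int, 1}. sg k * (\<lambda>_. 1::'a) k) = 0 \<and>
        w + \<theta> w = (\<Sum>k\<in>{0::int, 1}. rm ((\<lambda>_. 1::'a) k) (tp \<theta> k w))"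
    using a b c d by simp
  then show ?thesis unfolding Inv_def by (intro exI[of _ "{0::int, 1}"] exI[of _ "\<lambda>_. 1::'a"])
qed

lemma Inv_bcl: "v \<in> bcl rm \<theta> (w + \<theta> w) \<Longrightarrow> Inv w v"
proof (induction rule: bcl.induct)
  case bbase then show ?case by (rule Inv_base)
next
  case (badd v u) show ?case by (rule Inv_add[OF badd.IH])
next
  case (bsm v r) show ?case by (rule Inv_sm[OF bsm.IH])
next
  case (bth v) show ?case using Inv_shift[OF bth.IH, of 1] by (simp add: tp_1)
next
  case (bthi v) show ?case using Inv_shift[OF bthi.IH, of "-1"] by (simp add: tp_m1)
qed

end


context BRT begin

lemma extr_lem:
  assumes fS: "finite S0" and z: "(\<Sum>k\<in>S0. rm (r k) (tp \<theta> k w)) = 0"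
    and nM: "(\<Sum>k\<in>S0. sg k * r k) \<notin> M"
  shows "inv \<theta> w \<in> fcl rm \<theta> w"
proof -
  define Z where "Z = {k \<in> S0. r k \<notin> M}"
  have fZ: "finite Z" using fS by (simp add: Z_def)
  have ZS: "Z \<subseteq> S0" by (auto simp: Z_def)
  have Zne: "Z \<noteq> {}"
  proof
    assume "Z = {}"
    then have "\<forall>k\<in>S0. sg k * r k \<in> M" using idealD(4)[OF IM] by (auto simp: Z_def)
    then have "(\<Sum>k\<in>S0. sg k * r k) \<in> M" by (rule ideal_sum[OF IM fS])
    then show False using nM by simp
  qed
  define L where "L = Min Z"
  have LZ: "L \<in> Z" using fZ Zne by (simp add: L_def)
  have Lmin: "\<And>k. k \<in> Z \<Longrightarrow> L \<le> k" using fZ by (simp add: L_def)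
  have rL: "r L \<notin> M" using LZ by (simp add: Z_def)
  obtain e where e: "e * r L - 1 \<in> M" using max_inv[OF Mmax rL] by blast
  have A: "(\<Sum>k\<in>S0. rm (r k) (tp \<theta> (k - L) w)) = 0"
  proof -
    have "tp \<theta> (- L) (\<Sum>k\<in>S0. rm (r k) (tp \<theta> k w)) = 0" using z lin_zero[OF lintp] by simp
    moreover have "tp \<theta> (- L) (\<Sum>k\<in>S0. rm (r k) (tp \<theta> k w)) = (\<Sum>k\<in>S0. rm (r k) (tp \<theta> (k - L) w))"
    proof -
      have "tp \<theta> (- L) (\<Sum>k\<in>S0. rm (r k) (tp \<theta> k w)) = (\<Sum>k\<in>S0. rm (r k) (tp \<theta> (- L) (tp \<theta> k w)))"
        by (simp add: lin_sum[OF lintp] lin_cmD[OF lintp])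
      also have "\<dots> = (\<Sum>k\<in>S0. rm (r k) (tp \<theta> (k - L) w))"
      proof (rule sum.cong[OF refl])
        fix k show "rm (r k) (tp \<theta> (- L) (tp \<theta> k w)) = rm (r k) (tp \<theta> (k - L) w)"
          using tp_add[OF bijt, of "- L" k w] by simp
      qed
      finally show ?thesis .
    qed
    ultimately show ?thesis by simp
  qed
  have B: "(\<Sum>k\<in>Z. rm (r k) (tp \<theta> (k - L) w)) = 0"
  proof -
    have "(\<Sum>k\<in>Z. rm (r k) (tp \<theta> (k - L) w)) = (\<Sum>k\<in>S0. rm (r k) (tp \<theta> (k - L) w))"
      by (rule sum.mono_neutral_left[OF fS ZS]) (auto simp: Z_def R.annM)
    then show ?thesis using A by simp
  qed
  define Q where "Q = (\<Sum>k\<in>Z - {L}. rm (r k) (tp \<theta> (k - L) w))"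
  have C: "rm (r L) w + Q = 0"
    using B sum.remove[OF fZ LZ, of "\<lambda>k. rm (r k) (tp \<theta> (k - L) w)"] by (simp add: Q_def)
  have W: "w = - (\<Sum>k\<in>Z - {L}. rm (e * r k) (tp \<theta> (k - L) w))"
  proof -
    have "w = rm (e * r L) w" using rm_unit[OF e] by simp
    also have "\<dots> = rm e (rm (r L) w)" by (simp add: R.mult)
    also have "rm (r L) w = - Q" using C by (simp add: eq_neg_iff_add_eq_0)
    also have "rm e (- Q) = - (\<Sum>k\<in>Z - {L}. rm (e * r k) (tp \<theta> (k - L) w))"
      by (simp add: R.rminus Q_def R.rsum R.mult)
    finally show ?thesis .
  qed
  have "inv \<theta> w = - (\<Sum>k\<in>Z - {L}. rm (e * r k) (inv \<theta> (tp \<theta> (k - L) w)))"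
    by (subst W) (simp add: lin_neg[OF lini] lin_sum[OF lini] lin_cmD[OF lini])
  also have "\<dots> = - (\<Sum>k\<in>Z - {L}. rm (e * r k) (tp \<theta> (k - L - 1) w))"
    by (simp add: tp_pred[OF bijt])
  finally have I: "inv \<theta> w = - (\<Sum>k\<in>Z - {L}. rm (e * r k) (tp \<theta> (k - L - 1) w))" .
  have "(\<Sum>k\<in>Z - {L}. rm (e * r k) (tp \<theta> (k - L - 1) w)) \<in> fcl rm \<theta> w"
  proof (rule fcl_sum)
    show "finite (Z - {L})" using fZ by simp
    show "\<forall>k\<in>Z - {L}. rm (e * r k) (tp \<theta> (k - L - 1) w) \<in> fcl rm \<theta> w"
    proof
      fix k assume k: "k \<in> Z - {L}"
      then have "L < k" using Lmin[of k] by auto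
      then have "0 \<le> k - L - 1" by simp
      then have "tp \<theta> (k - L - 1) w = (\<theta> ^^ nat (k - L - 1)) w" by (simp add: tp_def)
      then have "tp \<theta> (k - L - 1) w \<in> fcl rm \<theta> w" using fcl_pow[OF fcl.fbase] by simp
      then show "rm (e * r k) (tp \<theta> (k - L - 1) w) \<in> fcl rm \<theta> w" by (rule fcl.fsm)
    qed
  qed
  then show ?thesis unfolding I by (rule fcl_neg)
qed

end


context BRT begin

lemma key:
  assumes simp: "simple_module \<sigma> H J n act" and w0: "w \<noteq> 0"
  shows "inv \<theta> w \<in> fcl rm \<theta> w"
proof (cases "w + \<theta> w = 0")
  case True
  then have "\<theta> w = - w" by (simp add: eq_neg_iff_add_eq_0 add.commute)
  then have "\<theta> (- w) = w" using lin_neg[OF lin, of w] by simp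
  then have "inv \<theta> w = - w" using bijt by (metis bij_is_inj inv_f_f)
  then show ?thesis using fcl_neg[OF fcl.fbase] by simp
next
  case False
  let ?u = "w + \<theta> w"
  have "bcl rm \<theta> ?u = {0} \<or> bcl rm \<theta> ?u = UNIV"
    using simp bcl_sub unfolding simple_module_def by blast
  then have "bcl rm \<theta> ?u = UNIV" using bcl.bbase[of ?u rm \<theta>] False by auto
  then have "Inv w w" using Inv_bcl by blast
  then obtain S d where 1: "finite S" "(\<Sum>k\<in>S. sg k * d k) = 0" "w = (\<Sum>k\<in>S. rm (d k) (tp \<theta> k w))"
    unfolding Inv_def by blast
  define S0 where "S0 = insert 0 S"
  define r where "r k = (if k \<in> {0} then 1 else 0) - (if k \<in> S then d k else 0)" for k
  have fS0: "finite S0" using 1 by (simp add: S0_def)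
  have sub0: "{0} \<subseteq> S0" "S \<subseteq> S0" by (auto simp: S0_def)
  have "(\<Sum>k\<in>S0. rm (r k) (tp \<theta> k w)) =
        (\<Sum>k\<in>S0. if k \<in> {0} then rm 1 (tp \<theta> k w) else 0) - (\<Sum>k\<in>S0. if k \<in> S then rm (d k) (tp \<theta> k w) else 0)"
  proof -
    have "rm (r k) (tp \<theta> k w) = (if k \<in> {0} then rm 1 (tp \<theta> k w) else 0) - (if k \<in> S then rm (d k) (tp \<theta> k w) else 0)" for k
      unfolding r_def by (simp add: R.ldiff)
    then show ?thesis by (simp add: sum_subtractf)
  qed
  also have "\<dots> = 0"
  proof -
    have z0: "0 \<in> S0" by (simp add: S0_def)
    have e1: "(\<Sum>k\<in>S0. if k \<in> {0} then rm 1 (tp \<theta> k w) else 0) = w"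
      using sum.delta[OF fS0, of 0 "\<lambda>k. rm 1 (tp \<theta> k w)"] z0 by simp
    have e2: "(\<Sum>k\<in>S0. if k \<in> S then rm (d k) (tp \<theta> k w) else 0) = w"
      using sum_if_sub[OF fS0 sub0(2), of "\<lambda>k. rm (d k) (tp \<theta> k w)"] 1(3) by simp
    show ?thesis by (simp only: e1 e2) simp
  qed
  finally have z: "(\<Sum>k\<in>S0. rm (r k) (tp \<theta> k w)) = 0" .
  have "(\<Sum>k\<in>S0. sg k * r k) =
        (\<Sum>k\<in>S0. if k \<in> {0} then sg k else 0) - (\<Sum>k\<in>S0. if k \<in> S then sg k * d k else 0)"
  proof -
    have "sg k * r k = (if k \<in> {0} then sg k else 0) - (if k \<in> S then sg k * d k else 0)" for k
      unfolding r_def by (simp add: right_diff_distrib)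
    then show ?thesis by (simp add: sum_subtractf)
  qed
  also have "\<dots> = 1"
  proof -
    have z0: "0 \<in> S0" by (simp add: S0_def)
    have e1: "(\<Sum>k\<in>S0. if k \<in> {0} then sg k else 0) = (1::'a)"
      using sum.delta[OF fS0, of 0 "sg"] z0 by (simp add: sg_def)
    have e2: "(\<Sum>k\<in>S0. if k \<in> S then sg k * d k else 0) = 0"
      using sum_if_sub[OF fS0 sub0(2), of "\<lambda>k. sg k * d k"] 1(2) by simp
    show ?thesis by (simp only: e1 e2) simp
  qed
  finally have "(\<Sum>k\<in>S0. sg k * r k) \<notin> M" using max_one[OF Mmax] by simp
  then show ?thesis by (rule extr_lem[OF fS0 z])
qed

lemma part3:
  "simple_module \<sigma> H J n act \<longleftrightarrow>
     (\<exists>v::'v. v \<noteq> 0) \<and> (\<forall>W. subspace rm W \<and> \<theta> ` W \<subseteq> W \<longrightarrow> W = {0} \<or> W = UNIV)"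
proof
  assume simp: "simple_module \<sigma> H J n act"
  show "(\<exists>v::'v. v \<noteq> 0) \<and> (\<forall>W. subspace rm W \<and> \<theta> ` W \<subseteq> W \<longrightarrow> W = {0} \<or> W = UNIV)"
  proof (intro conjI allI impI)
    show "\<exists>v::'v. v \<noteq> 0" using simp by (simp add: simple_module_def)
    fix W assume W: "subspace rm W \<and> \<theta> ` W \<subseteq> W"
    show "W = {0} \<or> W = UNIV"
    proof (cases "W = {0}")
      case False
      have "0 \<in> W" using W by (simp add: subspace_def)
      then obtain w where w: "w \<in> W" "w \<noteq> 0" using False by blast
      have fW: "v \<in> fcl rm \<theta> w \<Longrightarrow> v \<in> W" for v
      proof (induction rule: fcl.induct)
        case fbase then show ?case by (rule w(1))
      next
        case (fadd v u) then show ?case using W by (simp add: subspace_def)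
      next
        case (fsm v r) then show ?case using W by (simp add: subspace_def)
      next
        case (fth v) then show ?case using W by blast
      qed
      have ci: "v \<in> fcl rm \<theta> w \<Longrightarrow> inv \<theta> v \<in> fcl rm \<theta> w" for v
      proof (induction rule: fcl.induct)
        case fbase then show ?case by (rule key[OF simp w(2)])
      next
        case (fadd v u) then show ?case using lin_addD[OF lini, of v u] fcl.fadd by metis
      next
        case (fsm v r) then show ?case using lin_cmD[OF lini, of r v] fcl.fsm by metis
      next
        case (fth v) then show ?case using bijt by (simp add: bij_is_inj inv_f_f)
      qed
      have ct: "v \<in> fcl rm \<theta> w \<Longrightarrow> tp \<theta> k v \<in> fcl rm \<theta> w" for v k
      proof -
        assume v: "v \<in> fcl rm \<theta> w"
        have p1: "(\<theta> ^^ m) v \<in> fcl rm \<theta> w" for m by (induction m) (auto intro: fcl.fth v)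
        have p2: "(inv \<theta> ^^ m) v \<in> fcl rm \<theta> w" for m by (induction m) (auto intro: ci v)
        show ?thesis using p1 p2 by (simp add: tp_def)
      qed
      have "submodule \<sigma> H J n act (fcl rm \<theta> w)"
        by (rule closed_sub[OF fcl_zero fcl.fadd fcl_neg fcl.fsm ct])
      then have "fcl rm \<theta> w = {0} \<or> fcl rm \<theta> w = UNIV" using simp by (simp add: simple_module_def)
      then have "fcl rm \<theta> w = UNIV" using fcl.fbase[of w rm \<theta>] w(2) by auto
      then show ?thesis using fW by auto
    qed simp
  qed
next
  assume R: "(\<exists>v::'v. v \<noteq> 0) \<and> (\<forall>W. subspace rm W \<and> \<theta> ` W \<subseteq> W \<longrightarrow> W = {0} \<or> W = UNIV)"
  show "simple_module \<sigma> H J n act" unfolding simple_module_def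
  proof (intro conjI allI impI)
    show "\<exists>v::'v. v \<noteq> 0" using R by blast
    fix W assume W: "submodule \<sigma> H J n act W"
    have cl: "\<And>f v. f \<in> LL \<Longrightarrow> v \<in> W \<Longrightarrow> act f v \<in> W" using W by (simp add: submodule_def)
    have "subspace rm W" using W tmono0_Lambda unfolding subspace_def submodule_def by blast
    moreover have "\<theta> ` W \<subseteq> W"
    proof
      fix x assume "x \<in> \<theta> ` W"
      then obtain v where v: "v \<in> W" "x = \<theta> v" by auto
      then show "x \<in> W" unfolding th_expr
        using cl[OF tmono0_Lambda] cl[OF mono_L[OF a0(1) dvdn(1)]] by simp
    qed
    ultimately show "W = {0} \<or> W = UNIV" using R by blast
  qed
qed

end


lemma inv_sigma':
  assumes "0 < n" "\<sigma> ^^ n = id" shows "inv \<sigma> = \<sigma> ^^ (n - 1)"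
proof (rule inv_unique_comp)
  show "\<sigma> \<circ> \<sigma> ^^ (n - 1) = id" using assms by (metis Suc_diff_1 funpow.simps(2))
  show "\<sigma> ^^ (n - 1) \<circ> \<sigma> = id" using assms by (metis Suc_diff_1 funpow_Suc_right)
qed

lemma spow_mod':
  assumes npos: "0 < n" and period: "\<sigma> ^^ n = id"
  shows "spow \<sigma> k = \<sigma> ^^ nat (k mod int n)"
proof (cases "0 \<le> k")
  case True
  then have "nat (k mod int n) = nat k mod n" by (simp add: nat_mod_distrib)
  then show ?thesis using True funpow_period_mod[OF period, of "nat k"] by (simp add: spow_def)
next
  case False
  have "spow \<sigma> k = \<sigma> ^^ ((n - 1) * nat (-k))" using False
    by (simp add: spow_def inv_sigma'[OF npos period] funpow_mult mult.commute)
  also have "\<dots> = \<sigma> ^^ (((n - 1) * nat (-k)) mod n)" by (rule funpow_period_mod[OF period])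
  also have "((n - 1) * nat (-k)) mod n = nat (k mod int n)"
  proof -
    have e: "int ((n - 1) * nat (-k)) = k + (-k) * int n" using False npos by (simp add: of_nat_diff algebra_simps)
    have "int ((n - 1) * nat (-k)) mod int n = k mod int n" by (simp only: e mod_mult_self1)
    then show ?thesis by (metis nat_int zmod_int)
  qed
  finally show ?thesis .
qed

lemma funpow_img: "(f ^^ a) ` ((f ^^ b) ` X) = (f ^^ (a + b)) ` X"
  by (simp add: funpow_add image_comp)

lemma br_setup:
  fixes \<sigma> :: "'a::idom \<Rightarrow> 'a"
  assumes aut: "ring_aut \<sigma>"
    and H: "is_ideal H" and J: "is_ideal J"
    and npos: "0 < n"
    and period: "\<sigma> ^^ n = id"
    and orbit: "\<exists>M0. maximal_ideal M0 \<and> \<O> = sigma_orbit \<sigma> M0"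
    and nobreak: "\<forall>P\<in>\<O>. \<not> is_break \<sigma> H J P"
    and MO: "M \<in> \<O>"
  shows "maximal_ideal M \<and> (\<exists>a. a \<in> BR_I \<sigma> H J (int n) \<and> a \<notin> M) \<and> (\<exists>b. b \<in> BR_I \<sigma> H J (- int n) \<and> b \<notin> M)"
proof -
  obtain M0 where M0: "maximal_ideal M0" "\<O> = sigma_orbit \<sigma> M0" using orbit by blast
  obtain k where "M = spow \<sigma> k ` M0" using MO M0(2) by (auto simp: sigma_orbit_def)
  then have "M = (\<sigma> ^^ nat (k mod int n)) ` M0" using spow_mod'[OF npos period, of k] by simp
  then obtain i where Mi: "M = (\<sigma> ^^ i) ` M0" by blast
  have maxi: "maximal_ideal ((\<sigma> ^^ j) ` M0)" for j by (rule aut_max_image[OF aut_funpow[OF aut] M0(1)])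
  have Mmax: "maximal_ideal M" using maxi Mi by simp
  have inO: "(\<sigma> ^^ j) ` M \<in> \<O>" for j
  proof -
    have "(\<sigma> ^^ j) ` M = spow \<sigma> (int (j + i)) ` M0" by (simp add: Mi funpow_img spow_def nat_add_distrib)
    then show ?thesis using M0(2) by (auto simp: sigma_orbit_def)
  qed
  have NB: "\<not> ideal_prod H J \<subseteq> (\<sigma> ^^ Suc j) ` M" for j
  proof
    assume sub: "ideal_prod H J \<subseteq> (\<sigma> ^^ Suc j) ` M"
    let ?P = "(\<sigma> ^^ j) ` M"
    have Pm: "maximal_ideal ?P" using maxi[of "j + i"] by (simp add: Mi funpow_img)
    have "\<sigma> ` ?P = (\<sigma> ^^ Suc j) ` M" by (simp add: image_comp)
    then have "\<sigma> ` ?P \<in> SB H J" using sub max_prime_ideal[OF aut_max_image[OF aut Pm]] by (simp add: SB_def)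
    then have "is_break \<sigma> H J ?P" using Pm by (simp add: is_break_def)
    then show False using nobreak inO[of j] by blast
  qed
  have KI: "is_ideal ((\<sigma> ^^ Suc j) ` M)" for j by (rule aut_ideal_image[OF aut_funpow[OF aut] max_ideal[OF Mmax]])
  have NJ: "\<not> J \<subseteq> (\<sigma> ^^ Suc j) ` M" for j
  proof
    assume a: "J \<subseteq> (\<sigma> ^^ Suc j) ` M"
    have "\<forall>x\<in>H. \<forall>y\<in>J. x * y \<in> (\<sigma> ^^ Suc j) ` M"
    proof (intro ballI)
      fix x y assume "x \<in> H" "y \<in> J"
      then have "y \<in> (\<sigma> ^^ Suc j) ` M" using a by blast
      then show "x * y \<in> (\<sigma> ^^ Suc j) ` M" by (rule idealD(4)[OF KI])
    qed
    then have "ideal_prod H J \<subseteq> (\<sigma> ^^ Suc j) ` M" by (rule ideal_prod_sub[OF KI])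
    then show False using NB by blast
  qed
  have NH: "\<not> H \<subseteq> (\<sigma> ^^ Suc j) ` M" for j
  proof
    assume a: "H \<subseteq> (\<sigma> ^^ Suc j) ` M"
    have "\<forall>x\<in>H. \<forall>y\<in>J. x * y \<in> (\<sigma> ^^ Suc j) ` M"
    proof (intro ballI)
      fix x y assume "x \<in> H" "y \<in> J"
      then have "x \<in> (\<sigma> ^^ Suc j) ` M" using a by blast
      then show "x * y \<in> (\<sigma> ^^ Suc j) ` M" by (rule idealD(5)[OF KI])
    qed
    then have "ideal_prod H J \<subseteq> (\<sigma> ^^ Suc j) ` M" by (rule ideal_prod_sub[OF KI])
    then show False using NB by blast
  qed
  have bk: "X \<subseteq> (\<sigma> ^^ b) ` Y" if "(\<sigma> ^^ a) ` X \<subseteq> Y" "a + b = n" for X Y a b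
  proof -
    have "X = (\<sigma> ^^ b) ` ((\<sigma> ^^ a) ` X)" using that(2) period by (simp add: funpow_img add.commute)
    then show ?thesis using that(1) by blast
  qed
  have pos: "\<not> Ipos \<sigma> J k \<subseteq> M" if "k \<le> n" for k
    using that
  proof (induction k)
    case 0 then show ?case using max_one[OF Mmax] by auto
  next
    case (Suc k)
    have "\<not> (\<sigma> ^^ k) ` J \<subseteq> M"
    proof
      assume "(\<sigma> ^^ k) ` J \<subseteq> M"
      then have "J \<subseteq> (\<sigma> ^^ (n - k)) ` M" using bk[of k J M "n - k"] Suc.prems by simp
      moreover have "n - k = Suc (n - k - 1)" using Suc.prems by simp
      ultimately show False using NJ by metis
    qed
    then show ?case using ideal_prod_notsub[OF Mmax] Suc by simp
  qed
  have neg: "\<not> Ineg \<sigma> H k \<subseteq> M" if "k \<le> n" for k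
    using that
  proof (induction k)
    case 0 then show ?case using max_one[OF Mmax] by auto
  next
    case (Suc k)
    have md: "(- (int k + 1)) mod int n = int (n - k - 1)"
    proof -
      have e: "- (int k + 1) = int (n - k - 1) + (-1) * int n" using Suc.prems by (simp add: of_nat_diff)
      have "(- (int k + 1)) mod int n = int (n - k - 1) mod int n" by (simp only: e mod_mult_self1)
      also have "\<dots> = int ((n - k - 1) mod n)" by (simp only: zmod_int[symmetric])
      also have "(n - k - 1) mod n = n - k - 1" using Suc.prems by simp
      finally show ?thesis .
    qed
    have sp: "spow \<sigma> (- (int k + 1)) = \<sigma> ^^ (n - k - 1)" by (simp only: spow_mod'[OF npos period] md nat_int)
    have "\<not> spow \<sigma> (- (int k + 1)) ` H \<subseteq> M"
    proof
      assume "spow \<sigma> (- (int k + 1)) ` H \<subseteq> M"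
      then have "H \<subseteq> (\<sigma> ^^ Suc k) ` M" using bk[of "n - k - 1" H M "Suc k"] Suc.prems sp by simp
      then show False using NH by blast
    qed
    then show ?case using ideal_prod_notsub[OF Mmax] Suc by simp
  qed
  have "\<exists>a. a \<in> BR_I \<sigma> H J (int n) \<and> a \<notin> M" using pos[of n] by (auto simp: BR_I_pos)
  moreover have "\<exists>b. b \<in> BR_I \<sigma> H J (- int n) \<and> b \<notin> M" using neg[of n] by (auto simp: BR_I_neg)
  ultimately show ?thesis using Mmax by blast
qed


theorem lemma3p14:
  fixes \<iota> :: "'k::field \<Rightarrow> 'a::idom"
    and \<sigma> :: "'a \<Rightarrow> 'a"
    and H J :: "'a set"
    and n :: nat
    and \<O> :: "'a set set"
    and M :: "'a set"
  assumes kalg: "ring_hom_map \<iota>"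
    and aut: "ring_aut \<sigma>"
    and klin: "\<forall>c. \<sigma> (\<iota> c) = \<iota> c"
    and H: "is_ideal H" and J: "is_ideal J"
    and nonzero: "\<forall>k. BR_I \<sigma> H J k \<noteq> {0}"
    and npos: "0 < n"
    and period: "\<sigma> ^^ n = id"
    and orbit: "\<exists>M0. maximal_ideal M0 \<and> \<O> = sigma_orbit \<sigma> M0"
    and size: "card \<O> = n"
    and nobreak: "\<forall>P\<in>\<O>. \<not> is_break \<sigma> H J P"
    and MO: "M \<in> \<O>"
  shows
    "(\<forall>act :: (int \<Rightarrow> 'a) \<Rightarrow> 'v::ab_group_add \<Rightarrow> 'v.
        quot_module \<sigma> H J n M act \<longrightarrow>
        (\<exists>\<theta>. lin_aut (\<lambda>r. act (tmono 0 r)) \<theta> \<and>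
              theta_acts \<sigma> H J n act (\<lambda>r. act (tmono 0 r)) \<theta>))
   \<and> (\<forall>(rmul :: 'a \<Rightarrow> 'v \<Rightarrow> 'v) \<theta>.
        RM_space M rmul \<and> lin_aut rmul \<theta> \<longrightarrow>
        (\<exists>act. quot_module \<sigma> H J n M act \<and> (\<forall>r v. act (tmono 0 r) v = rmul r v) \<and>
               theta_acts \<sigma> H J n act rmul \<theta>))
   \<and> (\<forall>(act :: (int \<Rightarrow> 'a) \<Rightarrow> 'v \<Rightarrow> 'v) \<theta>.
        quot_module \<sigma> H J n M act \<and> lin_aut (\<lambda>r. act (tmono 0 r)) \<theta> \<and>
        theta_acts \<sigma> H J n act (\<lambda>r. act (tmono 0 r)) \<theta> \<longrightarrow>
        (simple_module \<sigma> H J n act \<longleftrightarrow>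
          (\<exists>v::'v. v \<noteq> 0) \<and>
          (\<forall>W. subspace (\<lambda>r. act (tmono 0 r)) W \<and> \<theta> ` W \<subseteq> W \<longrightarrow> W = {0} \<or> W = UNIV)))"
proof -
  have S: "maximal_ideal M \<and> (\<exists>a. a \<in> BR_I \<sigma> H J (int n) \<and> a \<notin> M) \<and> (\<exists>b. b \<in> BR_I \<sigma> H J (- int n) \<and> b \<notin> M)"
    by (rule br_setup[OF aut H J npos period orbit nobreak MO])
  interpret BR \<sigma> H J n M
    by unfold_locales (use aut H J npos period S in auto)
  show ?thesis
  proof (intro conjI allI impI)
    fix act :: "(int \<Rightarrow> 'a) \<Rightarrow> 'v \<Rightarrow> 'v"
    assume qm: "quot_module \<sigma> H J n M act"
    interpret BRA \<sigma> H J n M act by unfold_locales (rule qm)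
    show "\<exists>\<theta>. lin_aut (\<lambda>r. act (tmono 0 r)) \<theta> \<and> theta_acts \<sigma> H J n act (\<lambda>r. act (tmono 0 r)) \<theta>"
      by (rule part1)
  next
    fix rmul :: "'a \<Rightarrow> 'v \<Rightarrow> 'v" and \<theta>
    assume a: "RM_space M rmul \<and> lin_aut rmul \<theta>"
    interpret BRV \<sigma> H J n M rmul \<theta> by unfold_locales (use a in auto)
    show "\<exists>act. quot_module \<sigma> H J n M act \<and> (\<forall>r v. act (tmono 0 r) v = rmul r v) \<and> theta_acts \<sigma> H J n act rmul \<theta>"
      using part2 by blast
  next
    fix act :: "(int \<Rightarrow> 'a) \<Rightarrow> 'v \<Rightarrow> 'v" and \<theta>
    assume a: "quot_module \<sigma> H J n M act \<and> lin_aut (\<lambda>r. act (tmono 0 r)) \<theta> \<and>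
        theta_acts \<sigma> H J n act (\<lambda>r. act (tmono 0 r)) \<theta>"
    interpret BRT \<sigma> H J n M act \<theta> by unfold_locales (use a in auto)
    show "simple_module \<sigma> H J n act \<longleftrightarrow>
          (\<exists>v::'v. v \<noteq> 0) \<and>
          (\<forall>W. subspace (\<lambda>r. act (tmono 0 r)) W \<and> \<theta> ` W \<subseteq> W \<longrightarrow> W = {0} \<or> W = UNIV)"
      by (rule part3)
  qed
qed


end
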